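(* Let $\Gamma$ be a standard graph with minimal edge length $L_{\min}$. Let $f$ be a generic eigenfunction with eigenvalue $k^2$, where $k>\pi/L_{\min}$, and let $\Omega$ be a Neumann domain of $f$. Then (1) $\Omega$ is either a star graph or an interval; (2) $f|_\Omega$ is a generic eigenfunction of $\Omega$, considered as a standard graph; (3) $N(\Omega)=\phi(f|_\Omega)$.
   Context: A standard graph is a connected metric graph with finitely many vertices and edges, no degree-two vertices, edges $[0,l_e]$, with Laplacian $-d^2/dx^2$ and Neumann (Kirchhoff) vertex conditions (continuity, vanishing sum of outgoing derivatives). $\partial\Gamma$ = degree-one vertices. An eigenfunction is generic if its eigenvalue is simple, it is nonzero at every vertex, and its outgoing derivatives at every vertex not in $\partial\Gamma$ are nonzero. Neumann points of $f$ are points in edge interiors where $f'=0$; Neumann domains are the closures of connected components of $\Gamma$ minus Neumann points, regarded as metric graphs (with the Neumann points as boundary vertices) and as standard graphs. $N(\Omega):=|\{0\le\lambda<k^2:\lambda\text{ eigenvalue of }\Omega\}|$ with multiplicity. The nodal count $\phi(g)$ of an eigenfunction $g$ is the number of points in edge interiors where $g=0$. *)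

theory Defs
  imports "HOL-Analysis.Analysis"
begin

text \<open>A metric graph: finite vertex set, finite edge set, each edge e is the interval
 [0, len e] whose end 0 is attached to fst (ends e) and whose end len e is attached to
 snd (ends e).\<close>

record ('v, 'e) mgraph =
  verts :: "'v set"
  edges :: "'e set"
  ends  :: "'e \<Rightarrow> 'v \<times> 'v"
  len   :: "'e \<Rightarrow> real"

text \<open>Edge ends: (e, False) is the end at 0, (e, True) the end at len e.\<close>
definition endpt :: "('v,'e) mgraph \<Rightarrow> 'e \<Rightarrow> bool \<Rightarrow> 'v" where
  "endpt G e b = (if b then snd (ends G e) else fst (ends G e))"

definition ends_at :: "('v,'e) mgraph \<Rightarrow> 'v \<Rightarrow> ('e \<times> bool) set" where
  "ends_at G v = {(e, b). e \<in> edges G \<and> endpt G e b = v}"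

definition deg :: "('v,'e) mgraph \<Rightarrow> 'v \<Rightarrow> nat" where
  "deg G v = card (ends_at G v)"

definition boundary :: "('v,'e) mgraph \<Rightarrow> 'v set" where
  "boundary G = {v \<in> verts G. deg G v = 1}"

definition wf_graph :: "('v,'e) mgraph \<Rightarrow> bool" where
  "wf_graph G \<longleftrightarrow> finite (verts G) \<and> finite (edges G) \<and>
     (\<forall>e\<in>edges G. fst (ends G e) \<in> verts G \<and> snd (ends G e) \<in> verts G \<and> len G e > 0)"

definition vadj :: "('v,'e) mgraph \<Rightarrow> ('v \<times> 'v) set" where
  "vadj G = {(fst (ends G e), snd (ends G e)) | e. e \<in> edges G}
          \<union> {(snd (ends G e), fst (ends G e)) | e. e \<in> edges G}"

definition connected_graph :: "('v,'e) mgraph \<Rightarrow> bool" where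
  "connected_graph G \<longleftrightarrow> verts G \<noteq> {} \<and> (\<forall>u\<in>verts G. \<forall>w\<in>verts G. (u, w) \<in> (vadj G)\<^sup>*)"

text \<open>Standard graph: connected, finitely many vertices and edges, no degree-two vertices.
 (The Laplacian and Neumann--Kirchhoff conditions are built into the notions below.)\<close>
definition standard_graph :: "('v,'e) mgraph \<Rightarrow> bool" where
  "standard_graph G \<longleftrightarrow> wf_graph G \<and> connected_graph G \<and> (\<forall>v\<in>verts G. deg G v \<noteq> 2)"

definition Lmin :: "('v,'e) mgraph \<Rightarrow> real" where
  "Lmin G = Min (len G ` edges G)"

definition star_graph :: "('v,'e) mgraph \<Rightarrow> bool" where
  "star_graph G \<longleftrightarrow> (\<exists>c\<in>verts G.
      (\<forall>e\<in>edges G. (fst (ends G e) = c \<and> snd (ends G e) \<noteq> c) \<or>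
                   (snd (ends G e) = c \<and> fst (ends G e) \<noteq> c)) \<and>
      (\<forall>v\<in>verts G - {c}. deg G v = 1))"

definition interval_graph :: "('v,'e) mgraph \<Rightarrow> bool" where
  "interval_graph G \<longleftrightarrow> card (edges G) = 1 \<and>
     (\<forall>e\<in>edges G. fst (ends G e) \<noteq> snd (ends G e) \<and>
                  verts G = {fst (ends G e), snd (ends G e)})"

text \<open>A function on G is given edgewise: f e is defined on [0, len e].\<close>

definition Dv :: "('v,'e) mgraph \<Rightarrow> ('e \<Rightarrow> real \<Rightarrow> real) \<Rightarrow> 'e \<Rightarrow> real \<Rightarrow> real" where
  "Dv G f e x = vector_derivative (f e) (at x within {0..len G e})"

definition endval :: "('v,'e) mgraph \<Rightarrow> ('e \<Rightarrow> real \<Rightarrow> real) \<Rightarrow> 'e \<Rightarrow> bool \<Rightarrow> real" where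
  "endval G f e b = f e (if b then len G e else 0)"

definition outder :: "('v,'e) mgraph \<Rightarrow> ('e \<Rightarrow> real \<Rightarrow> real) \<Rightarrow> 'e \<Rightarrow> bool \<Rightarrow> real" where
  "outder G f e b = (if b then - Dv G f e (len G e) else Dv G f e 0)"

definition solves :: "('v,'e) mgraph \<Rightarrow> real \<Rightarrow> ('e \<Rightarrow> real \<Rightarrow> real) \<Rightarrow> bool" where
  "solves G lam f \<longleftrightarrow>
     (\<forall>e\<in>edges G. \<forall>x\<in>{0..len G e}.
        (f e has_vector_derivative Dv G f e x) (at x within {0..len G e}) \<and>
        (Dv G f e has_vector_derivative (- lam * f e x)) (at x within {0..len G e})) \<and>
     (\<forall>v\<in>verts G. \<forall>p\<in>ends_at G v. \<forall>q\<in>ends_at G v.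
        endval G f (fst p) (snd p) = endval G f (fst q) (snd q)) \<and>
     (\<forall>v\<in>verts G. (\<Sum>p\<in>ends_at G v. outder G f (fst p) (snd p)) = 0)"

definition is_eigenfunction :: "('v,'e) mgraph \<Rightarrow> real \<Rightarrow> ('e \<Rightarrow> real \<Rightarrow> real) \<Rightarrow> bool" where
  "is_eigenfunction G lam f \<longleftrightarrow> solves G lam f \<and> (\<exists>e\<in>edges G. \<exists>x\<in>{0..len G e}. f e x \<noteq> 0)"

definition eigenvalue :: "('v,'e) mgraph \<Rightarrow> real \<Rightarrow> bool" where
  "eigenvalue G lam \<longleftrightarrow> (\<exists>f. is_eigenfunction G lam f)"

definition lin_indep :: "('v,'e) mgraph \<Rightarrow> ('e \<Rightarrow> real \<Rightarrow> real) list \<Rightarrow> bool" where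
  "lin_indep G gs \<longleftrightarrow> (\<forall>c :: nat \<Rightarrow> real.
      (\<forall>e\<in>edges G. \<forall>x\<in>{0..len G e}. (\<Sum>i<length gs. c i * (gs ! i) e x) = 0) \<longrightarrow>
      (\<forall>i<length gs. c i = 0))"

definition mult :: "('v,'e) mgraph \<Rightarrow> real \<Rightarrow> nat" where
  "mult G lam = Sup {n. \<exists>gs. length gs = n \<and> (\<forall>g\<in>set gs. solves G lam g) \<and> lin_indep G gs}"

definition generic_eigenfunction :: "('v,'e) mgraph \<Rightarrow> real \<Rightarrow> ('e \<Rightarrow> real \<Rightarrow> real) \<Rightarrow> bool" where
  "generic_eigenfunction G lam f \<longleftrightarrow>
     is_eigenfunction G lam f \<and> mult G lam = 1 \<and>
     (\<forall>v\<in>verts G. \<forall>p\<in>ends_at G v. endval G f (fst p) (snd p) \<noteq> 0) \<and>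
     (\<forall>v\<in>verts G - boundary G. \<forall>p\<in>ends_at G v. outder G f (fst p) (snd p) \<noteq> 0)"

text \<open>N(Omega) = number of eigenvalues in [0, k^2), counted with multiplicity.\<close>
definition Ncount :: "('v,'e) mgraph \<Rightarrow> real \<Rightarrow> nat" where
  "Ncount G k = (\<Sum>lam\<in>{lam. 0 \<le> lam \<and> lam < k\<^sup>2 \<and> eigenvalue G lam}. mult G lam)"

definition nodal_count :: "('v,'e) mgraph \<Rightarrow> ('e \<Rightarrow> real \<Rightarrow> real) \<Rightarrow> nat" where
  "nodal_count G g = card {(e, x). e \<in> edges G \<and> 0 < x \<and> x < len G e \<and> g e x = 0}"

definition neumann_pts :: "('v,'e) mgraph \<Rightarrow> ('e \<Rightarrow> real \<Rightarrow> real) \<Rightarrow> ('e \<times> real) set" where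
  "neumann_pts G f = {(e, x). e \<in> edges G \<and> 0 < x \<and> x < len G e \<and> Dv G f e x = 0}"

definition cutpts :: "('v,'e) mgraph \<Rightarrow> ('e \<Rightarrow> real \<Rightarrow> real) \<Rightarrow> 'e \<Rightarrow> real set" where
  "cutpts G f e = {0, len G e} \<union> {x. (e, x) \<in> neumann_pts G f}"

definition pieces :: "('v,'e) mgraph \<Rightarrow> ('e \<Rightarrow> real \<Rightarrow> real) \<Rightarrow> ('e \<times> real \<times> real) set" where
  "pieces G f = {(e, a, b). e \<in> edges G \<and> a \<in> cutpts G f e \<and> b \<in> cutpts G f e \<and> a < b \<and>
                     (\<forall>y\<in>cutpts G f e. \<not> (a < y \<and> y < b))}"

text \<open>Vertices of the graph cut at the Neumann points: original vertices (Inl v), and for a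
 Neumann point (e,x) two new boundary vertices: Inr (e,x,False) on the side of smaller
 parameter and Inr (e,x,True) on the side of larger parameter.\<close>
definition cut_ends :: "('v,'e) mgraph \<Rightarrow> 'e \<times> real \<times> real \<Rightarrow>
    ('v + 'e \<times> real \<times> bool) \<times> ('v + 'e \<times> real \<times> bool)" where
  "cut_ends G p = (case p of (e, a, b) \<Rightarrow>
     ((if a = 0 then Inl (fst (ends G e)) else Inr (e, a, True)),
      (if b = len G e then Inl (snd (ends G e)) else Inr (e, b, False))))"

definition cut_graph :: "('v,'e) mgraph \<Rightarrow> ('e \<Rightarrow> real \<Rightarrow> real) \<Rightarrow>
    ('v + 'e \<times> real \<times> bool, 'e \<times> real \<times> real) mgraph" where
  "cut_graph G f = \<lparr> verts = {fst (cut_ends G p) | p. p \<in> pieces G f} \<union> {snd (cut_ends G p) | p. p \<in> pieces G f},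
                     edges = pieces G f,
                     ends = cut_ends G,
                     len = (\<lambda>(e, a, b). b - a) \<rparr>"

definition edge_adj :: "('v,'e) mgraph \<Rightarrow> ('e \<times> 'e) set" where
  "edge_adj G = {(p, q). p \<in> edges G \<and> q \<in> edges G \<and> (\<exists>b b'. endpt G p b = endpt G q b')}"

definition component_graph :: "('v,'e) mgraph \<Rightarrow> 'e \<Rightarrow> ('v,'e) mgraph" where
  "component_graph G p0 =
     (let C = {q \<in> edges G. (p0, q) \<in> (edge_adj G)\<^sup>*} in
      \<lparr> verts = {endpt G q b | q b. q \<in> C}, edges = C, ends = ends G, len = len G \<rparr>)"

text \<open>Omega is a Neumann domain of f: the closure of a connected component of G minus the
 Neumann points, regarded as a metric graph whose Neumann points are boundary vertices.\<close>
definition neumann_domain :: "('v,'e) mgraph \<Rightarrow> ('e \<Rightarrow> real \<Rightarrow> real) \<Rightarrow>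
    ('v + 'e \<times> real \<times> bool, 'e \<times> real \<times> real) mgraph \<Rightarrow> bool" where
  "neumann_domain G f \<Omega> \<longleftrightarrow>
     (\<exists>p0\<in>edges (cut_graph G f). \<Omega> = component_graph (cut_graph G f) p0)"

definition restrict_nd :: "('e \<Rightarrow> real \<Rightarrow> real) \<Rightarrow> ('e \<times> real \<times> real) \<Rightarrow> real \<Rightarrow> real" where
  "restrict_nd f p t = (case p of (e, a, b) \<Rightarrow> f e (a + t))"

end

theory Submission
  imports Defs
begin

lemma ode_zero:
  fixes h h' :: "real \<Rightarrow> real"
  assumes hd: "\<And>t. t \<in> {0..l} \<Longrightarrow> (h has_real_derivative h' t) (at t within {0..l})"
    and hd2: "\<And>t. t \<in> {0..l} \<Longrightarrow> (h' has_real_derivative (- lam * h t)) (at t within {0..l})"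
    and lam: "lam \<ge> 0" and t0: "t0 \<in> {0..l}" and z1: "h t0 = 0" and z2: "h' t0 = 0"
  shows "\<forall>t\<in>{0..l}. h t = 0 \<and> h' t = 0"
proof -
  define E where "E t = (h' t)\<^sup>2 + lam * (h t)\<^sup>2" for t
  have "\<exists>c. \<forall>x\<in>{0..l}. E x = c"
  proof (rule has_derivative_zero_constant)
    fix x assume x: "x \<in> {0..l::real}"
    have "(E has_real_derivative (2 * h' x * (- lam * h x) + lam * (2 * h x * h' x))) (at x within {0..l})"
      unfolding E_def[abs_def]
      by (auto intro!: derivative_eq_intros hd hd2 x)
    then have "(E has_real_derivative 0) (at x within {0..l})"
      by (simp add: algebra_simps)
    then show "(E has_derivative (\<lambda>h. 0)) (at x within {0..l})"
      by (simp add: has_field_derivative_def lambda_zero)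
  qed simp
  then obtain c where c: "\<forall>x\<in>{0..l}. E x = c" by blast
  have "c = 0" using c[rule_format, OF t0] z1 z2 by (simp add: E_def)
  have d0: "h' t = 0" if "t \<in> {0..l}" for t
  proof -
    have "(h' t)\<^sup>2 + lam * (h t)\<^sup>2 = 0" using c that \<open>c = 0\<close> by (auto simp: E_def)
    moreover have "lam * (h t)\<^sup>2 \<ge> 0" using lam by simp
    ultimately show ?thesis by (smt (verit) zero_le_power2 power2_eq_square power_eq_0_iff)
  qed
  have "\<exists>c. \<forall>x\<in>{0..l}. h x = c"
  proof (rule has_derivative_zero_constant)
    fix x assume x: "x \<in> {0..l::real}"
    have "(h has_real_derivative 0) (at x within {0..l})" using hd[OF x] d0[OF x] by simp
    then show "(h has_derivative (\<lambda>h. 0)) (at x within {0..l})"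
      by (simp add: has_field_derivative_def lambda_zero)
  qed simp
  then obtain c2 where "\<forall>x\<in>{0..l}. h x = c2" by blast
  then show ?thesis using t0 z1 d0 by auto
qed

lemma ode_rep:
  fixes h h' :: "real \<Rightarrow> real"
  assumes hd: "\<And>t. t \<in> {0..l} \<Longrightarrow> (h has_real_derivative h' t) (at t within {0..l})"
    and hd2: "\<And>t. t \<in> {0..l} \<Longrightarrow> (h' has_real_derivative (- lam * h t)) (at t within {0..l})"
    and lam: "lam \<ge> 0" and t0: "t0 \<in> {0..l}" and z2: "h' t0 = 0"
  shows "\<forall>t\<in>{0..l}. h t = h t0 * cos (sqrt lam * (t - t0)) \<and>
                     h' t = - h t0 * sqrt lam * sin (sqrt lam * (t - t0))"
proof -
  define m where "m = sqrt lam"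
  have m2: "m * m = lam" using lam by (simp add: m_def)
  define w where "w t = h t - h t0 * cos (m * (t - t0))" for t
  define w' where "w' t = h' t + h t0 * m * sin (m * (t - t0))" for t
  have "\<forall>t\<in>{0..l}. w t = 0 \<and> w' t = 0"
  proof (rule ode_zero[OF _ _ lam t0])
    fix t assume t: "t \<in> {0..l}"
    show "(w has_real_derivative w' t) (at t within {0..l})"
      unfolding w_def[abs_def] w'_def
      by (auto intro!: derivative_eq_intros hd t)
    have "(w' has_real_derivative (- lam * h t + h t0 * m * (cos (m * (t - t0)) * m))) (at t within {0..l})"
      unfolding w'_def[abs_def]
      by (auto intro!: derivative_eq_intros hd2 t)
    then show "(w' has_real_derivative (- lam * w t)) (at t within {0..l})"
      by (simp add: w_def algebra_simps flip: m2)
  qed (auto simp: w_def w'_def z2)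
  then show ?thesis by (auto simp: w_def w'_def m_def)
qed


lemma tan_strict:
  fixes a b :: real
  assumes "0 \<le> a" "a < b" "b \<le> pi" "\<not> (a \<le> pi/2 \<and> pi/2 \<le> b)"
  shows "tan a < tan b"
proof (cases "b < pi/2")
  case True
  then show ?thesis using assms by (intro tan_monotone) auto
next
  case False
  then have "a > pi/2" using assms by auto
  have "tan (a - pi) < tan (b - pi)" using assms \<open>a > pi/2\<close> by (intro tan_monotone) auto
  moreover have "tan (a - pi) = tan a" "tan (b - pi) = tan b"
    using tan_periodic_pi[of "a - pi"] tan_periodic_pi[of "b - pi"] by auto
  ultimately show ?thesis by simp
qed

lemma sum_at_top:
  fixes f :: "'b \<Rightarrow> 'a \<Rightarrow> real"
  assumes "finite S" "S \<noteq> {}" "\<And>e. e \<in> S \<Longrightarrow> filterlim (f e) at_top F"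
  shows "filterlim (\<lambda>x. \<Sum>e\<in>S. f e x) at_top F"
  using assms
proof (induction S rule: finite_ne_induct)
  case (singleton x)
  then show ?case by simp
next
  case (insert x S)
  then show ?case by (simp add: filterlim_at_top_add_at_top)
qed

locale spec =
  fixes P :: "'b set" and l :: "'b \<Rightarrow> real" and k :: real
  assumes finP: "finite P" and neP: "P \<noteq> {}" and lpos: "\<And>e. e \<in> P \<Longrightarrow> l e > 0"
    and kpos: "k > 0"
    and kl: "\<And>e. e \<in> P \<Longrightarrow> k * l e \<le> pi" and ckl: "\<And>e. e \<in> P \<Longrightarrow> cos (k * l e) \<noteq> 0"
    and Fk: "(\<Sum>e\<in>P. tan (k * l e)) = 0"
begin

definition F where "F \<mu> = (\<Sum>e\<in>P. tan (\<mu> * l e))"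
definition Q where "Q = {\<mu>. 0 < \<mu> \<and> \<mu> < k \<and> (\<exists>e\<in>P. cos (\<mu> * l e) = 0)}"
definition R where "R = {\<mu>. 0 < \<mu> \<and> \<mu> < k \<and> \<mu> \<notin> Q \<and> F \<mu> = 0}"
definition m where "m \<mu> = card {e\<in>P. cos (\<mu> * l e) = 0}"

lemma kl_ne: "e \<in> P \<Longrightarrow> k * l e \<noteq> pi/2"
  using ckl by (metis cos_pi_half)

lemma pole_iff:
  assumes "e \<in> P" "0 \<le> \<mu>" "\<mu> \<le> k"
  shows "cos (\<mu> * l e) = 0 \<longleftrightarrow> \<mu> * l e = pi/2"
proof
  have "\<mu> * l e \<le> k * l e" using assms lpos[of e] by (intro mult_right_mono) auto
  then have le: "\<mu> * l e \<le> pi" using kl[OF assms(1)] by linarith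
  have ge: "0 \<le> \<mu> * l e" using assms lpos[of e] by simp
  assume "cos (\<mu> * l e) = 0"
  then show "\<mu> * l e = pi/2" using cos_inj_pi[OF ge le, of "pi/2"] by simp
next
  assume h: "\<mu> * l e = pi/2" show "cos (\<mu> * l e) = 0" unfolding h by (rule cos_pi_half)
qed

lemma Q_eq: "Q = (\<lambda>e. pi / (2 * l e)) ` {e\<in>P. pi/2 < k * l e}"
proof (intro set_eqI iffI)
  fix \<mu> assume "\<mu> \<in> Q"
  then obtain e where e: "e \<in> P" "0 < \<mu>" "\<mu> < k" "cos (\<mu> * l e) = 0" by (auto simp: Q_def)
  then have "\<mu> * l e = pi/2" using pole_iff by auto
  moreover have "\<mu> * l e < k * l e" using e lpos[of e] by simp
  ultimately have "pi/2 < k * l e" by linarith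
  moreover have "\<mu> = pi / (2 * l e)" using \<open>\<mu> * l e = pi/2\<close> lpos[of e] e by (simp add: field_simps)
  ultimately show "\<mu> \<in> (\<lambda>e. pi / (2 * l e)) ` {e\<in>P. pi/2 < k * l e}"
    using e by auto
next
  fix \<mu> assume "\<mu> \<in> (\<lambda>e. pi / (2 * l e)) ` {e\<in>P. pi/2 < k * l e}"
  then obtain e where e: "e \<in> P" "pi/2 < k * l e" "\<mu> = pi / (2 * l e)" by auto
  have lp: "l e > 0" using lpos e by auto
  have "\<mu> * l e = pi/2" using e lp by (simp add: field_simps)
  moreover have "\<mu> < k"
  proof -
    have "\<mu> * l e < k * l e" using e \<open>\<mu> * l e = pi/2\<close> by linarith
    then show ?thesis using lp by (meson less_le mult_right_less_imp_less)
  qed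
  moreover have "0 < \<mu>" using e lp by simp
  ultimately show "\<mu> \<in> Q" using e by (auto simp: Q_def intro!: bexI[of _ e])
qed

lemma finQ: "finite Q" unfolding Q_eq using finP by simp

lemma neQ: "Q \<noteq> {}"
proof
  assume "Q = {}"
  then have "\<forall>e\<in>P. \<not> pi/2 < k * l e" unfolding Q_eq by auto
  then have "\<forall>e\<in>P. k * l e < pi/2" using kl_ne by force
  then have "\<forall>e\<in>P. 0 < tan (k * l e)" using lpos kpos by (auto intro!: tan_gt_zero)
  then have "0 < (\<Sum>e\<in>P. tan (k * l e))" using finP neP by (intro sum_pos) auto
  then show False using Fk by simp
qed

lemma m_sum: "(\<Sum>q\<in>Q. m q) = card {e\<in>P. pi/2 < k * l e}"
proof -
  let ?P' = "{e\<in>P. pi/2 < k * l e}" and ?h = "\<lambda>e. pi / (2 * l e)"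
  have "card ?P' = (\<Sum>e\<in>?P'. 1)" by simp
  also have "\<dots> = (\<Sum>q\<in>?h ` ?P'. \<Sum>e\<in>{x\<in>?P'. ?h x = q}. 1)"
    by (rule sum.image_gen) (use finP in simp)
  also have "\<dots> = (\<Sum>q\<in>Q. m q)"
    unfolding Q_eq[symmetric]
  proof (rule sum.cong[OF refl])
    fix q assume q: "q \<in> Q"
    then have q0: "0 < q" "q < k" by (auto simp: Q_def)
    have "{x\<in>?P'. ?h x = q} = {e\<in>P. cos (q * l e) = 0}"
    proof (intro set_eqI iffI)
      fix x assume x: "x \<in> {x\<in>?P'. ?h x = q}"
      then have "q * l x = pi/2" using lpos[of x] by (auto simp: field_simps)
      then show "x \<in> {e\<in>P. cos (q * l e) = 0}" using x by auto
    next
      fix x assume x: "x \<in> {e\<in>P. cos (q * l e) = 0}"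
      then have "q * l x = pi/2" using pole_iff[of x q] q0 by auto
      moreover have "q * l x < k * l x" using q0 lpos[of x] x by simp
      ultimately have "pi/2 < k * l x" by linarith
      moreover have "?h x = q" using \<open>q * l x = pi/2\<close> lpos[of x] x by (simp add: field_simps)
      ultimately show "x \<in> {x\<in>?P'. ?h x = q}" using x by auto
    qed
    then show "(\<Sum>e\<in>{x\<in>?P'. ?h x = q}. 1) = m q" by (simp add: m_def)
  qed
  finally show ?thesis by simp
qed

lemma F_mono:
  assumes "0 \<le> x" "x < y" "y \<le> k" "\<forall>\<mu>\<in>{x..y}. \<forall>e\<in>P. cos (\<mu> * l e) \<noteq> 0"
  shows "F x < F y"
  unfolding F_def
proof (rule sum_strict_mono[OF finP neP])
  fix e assume e: "e \<in> P"
  have lp: "l e > 0" using lpos e by auto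
  have "y * l e \<le> k * l e" using assms lp by (intro mult_right_mono) auto
  then have yl: "y * l e \<le> pi" using kl[OF e] by linarith
  have np: "\<not> (x * l e \<le> pi/2 \<and> pi/2 \<le> y * l e)"
  proof
    assume h: "x * l e \<le> pi/2 \<and> pi/2 \<le> y * l e"
    define z where "z = pi / (2 * l e)"
    have zz: "z * l e = pi/2" using lp by (simp add: z_def)
    have "z \<in> {x..y}" using h lp by (auto simp: z_def field_simps)
    moreover have "cos (z * l e) = 0" unfolding zz by (rule cos_pi_half)
    ultimately show False using assms(4) e by auto
  qed
  show "tan (x * l e) < tan (y * l e)"
    using assms lp yl np by (intro tan_strict) auto
qed

lemma F_pos:
  assumes "0 < \<mu>" "\<mu> < Min Q"
  shows "F \<mu> > 0"
  unfolding F_def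
proof (rule sum_pos[OF finP neP])
  fix e assume e: "e \<in> P"
  have lp: "l e > 0" using lpos e by auto
  have "\<mu> * l e < pi/2"
  proof (cases "pi/2 < k * l e")
    case True
    then have "pi / (2 * l e) \<in> Q" unfolding Q_eq using e by auto
    then have "Min Q \<le> pi / (2 * l e)" using finQ by simp
    then have "\<mu> < pi / (2 * l e)" using assms by linarith
    then show ?thesis using lp by (simp add: field_simps)
  next
    case False
    have "\<mu> < k"
    proof -
      obtain q where "q \<in> Q" using neQ by auto
      then have "Min Q \<le> q" "q < k" using finQ by (auto simp: Q_def)
      then show ?thesis using assms by simp
    qed
    then have "\<mu> * l e < k * l e" using lp by simp
    then show ?thesis using False by simp
  qed
  then show "0 < tan (\<mu> * l e)" using assms lp by (intro tan_gt_zero) auto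
qed

lemma Q_sub: "q \<in> Q \<Longrightarrow> 0 < q \<and> q < k" by (auto simp: Q_def)

lemma nopole:
  assumes "0 < \<mu>" "\<mu> \<le> k" "\<mu> \<notin> Q" "e \<in> P"
  shows "cos (\<mu> * l e) \<noteq> 0"
  using assms ckl by (cases "\<mu> = k") (auto simp: Q_def)

lemma F_neg:
  assumes "Max Q < \<mu>" "\<mu> < k"
  shows "F \<mu> < 0"
proof -
  have "0 < \<mu>" using assms neQ finQ Q_sub by (meson Max_in less_trans)
  have "F \<mu> < F k"
  proof (rule F_mono)
    show "\<forall>x\<in>{\<mu>..k}. \<forall>e\<in>P. cos (x * l e) \<noteq> 0"
    proof (intro ballI)
      fix x e assume x: "x \<in> {\<mu>..k}" and e: "e \<in> P"
      have "x \<notin> Q" using x assms finQ by (auto dest: Max_ge)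
      then show "cos (x * l e) \<noteq> 0" using nopole[of x e] x e \<open>0 < \<mu>\<close> by auto
    qed
  qed (use assms \<open>0 < \<mu>\<close> in auto)
  then show ?thesis using Fk by (simp add: F_def)
qed

end

lemma lin_dep_bound:
  fixes v :: "'i \<Rightarrow> 'z \<Rightarrow> real"
  assumes "finite Z" "finite I" "card Z < card I"
  shows "\<exists>c. (\<exists>i\<in>I. c i \<noteq> 0) \<and> (\<forall>z\<in>Z. (\<Sum>i\<in>I. c i * v i z) = 0)"
  using assms
proof (induction Z arbitrary: I v rule: finite_induct)
  case empty
  then obtain i where "i \<in> I" by fastforce
  then show ?case by (intro exI[of _ "\<lambda>_. 1"]) auto
next
  case (insert z Z)
  show ?case
  proof (cases "\<forall>i\<in>I. v i z = 0")
    case True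
    have "card Z < card I" using insert by simp
    then obtain c where c: "\<exists>i\<in>I. c i \<noteq> 0" "\<forall>y\<in>Z. (\<Sum>i\<in>I. c i * v i y) = 0"
      using insert.IH[OF insert.prems(1)] by blast
    then show ?thesis using True by (intro exI[of _ c]) auto
  next
    case False
    then obtain j where j: "j \<in> I" "v j z \<noteq> 0" by auto
    define I' where "I' = I - {j}"
    define v' where "v' i y = v i y - (v i z / v j z) * v j y" for i y
    have "card Z < card I'" using insert j by (simp add: I'_def card_Diff_singleton)
    moreover have "finite I'" using insert by (simp add: I'_def)
    ultimately obtain c' where c': "\<exists>i\<in>I'. c' i \<noteq> 0" "\<forall>y\<in>Z. (\<Sum>i\<in>I'. c' i * v' i y) = 0"
      using insert.IH by blast
    define c where "c i = (if i = j then - (\<Sum>i\<in>I'. c' i * (v i z / v j z)) else c' i)" for i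
    have key: "(\<Sum>i\<in>I. c i * v i y) = (\<Sum>i\<in>I'. c' i * v' i y)" for y
    proof -
      have "(\<Sum>i\<in>I. c i * v i y) = c j * v j y + (\<Sum>i\<in>I'. c i * v i y)"
        using j insert.prems(1) by (simp add: I'_def sum.remove)
      also have "(\<Sum>i\<in>I'. c i * v i y) = (\<Sum>i\<in>I'. c' i * v i y)"
        by (rule sum.cong) (auto simp: c_def I'_def)
      also have "c j * v j y = - (\<Sum>i\<in>I'. c' i * (v i z / v j z) * v j y)"
        by (simp add: c_def sum_distrib_right)
      finally show ?thesis
        by (simp add: v'_def algebra_simps sum_subtractf)
    qed
    have "\<forall>y\<in>insert z Z. (\<Sum>i\<in>I. c i * v i y) = 0"
    proof
      fix y assume "y \<in> insert z Z"
      moreover have "(\<Sum>i\<in>I'. c' i * v' i z) = 0" using j by (simp add: v'_def)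
      ultimately show "(\<Sum>i\<in>I. c i * v i y) = 0" using key c' by auto
    qed
    moreover have "\<exists>i\<in>I. c i \<noteq> 0" using c' by (auto simp: c_def I'_def)
    ultimately show ?thesis by blast
  qed
qed

definition msol where
  "msol G lam = {n. \<exists>gs. length gs = n \<and> (\<forall>g\<in>set gs. solves G lam g) \<and> lin_indep G gs}"

lemma mult_msol: "mult G lam = Sup (msol G lam)"
  by (simp add: mult_def msol_def)

lemma msol_bound:
  fixes \<phi> :: "('e \<Rightarrow> real \<Rightarrow> real) \<Rightarrow> 'z \<Rightarrow> real"
  assumes finZ: "finite Z"
    and rep: "\<And>g. solves G lam g \<Longrightarrow> \<forall>e\<in>edges G. \<forall>x\<in>{0..len G e}. g e x = (\<Sum>z\<in>Z. \<phi> g z * B z e x)"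
    and n: "n \<in> msol G lam"
  shows "n \<le> card Z"
proof (rule ccontr)
  assume "\<not> n \<le> card Z"
  then have lt: "card Z < card {..<n}" by simp
  obtain gs where gs: "length gs = n" "\<forall>g\<in>set gs. solves G lam g" "lin_indep G gs"
    using n by (auto simp: msol_def)
  obtain c where c: "\<exists>i\<in>{..<n}. c i \<noteq> 0" "\<forall>z\<in>Z. (\<Sum>i\<in>{..<n}. c i * \<phi> (gs ! i) z) = 0"
    using lin_dep_bound[OF finZ _ lt, of "\<lambda>i z. \<phi> (gs ! i) z"] by auto
  have "\<forall>e\<in>edges G. \<forall>x\<in>{0..len G e}. (\<Sum>i<length gs. c i * (gs ! i) e x) = 0"
  proof (intro ballI)
    fix e x assume e: "e \<in> edges G" and x: "x \<in> {0..len G e}"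
    have "(\<Sum>i<length gs. c i * (gs ! i) e x) = (\<Sum>i<n. c i * (\<Sum>z\<in>Z. \<phi> (gs ! i) z * B z e x))"
    proof (rule sum.cong)
      fix i assume "i \<in> {..<n}"
      then have "solves G lam (gs ! i)" using gs by auto
      then show "c i * (gs ! i) e x = c i * (\<Sum>z\<in>Z. \<phi> (gs ! i) z * B z e x)"
        using rep e x by auto
    qed (simp add: gs)
    also have "\<dots> = (\<Sum>z\<in>Z. (\<Sum>i<n. c i * \<phi> (gs ! i) z) * B z e x)"
      by (simp add: sum_distrib_left sum_distrib_right mult.assoc sum.swap[of _ "{..<n}"])
    also have "\<dots> = 0" using c by simp
    finally show "(\<Sum>i<length gs. c i * (gs ! i) e x) = 0" .
  qed
  then have "\<forall>i<length gs. c i = 0" using gs(3) by (simp add: lin_indep_def)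
  then show False using c gs by auto
qed

lemma mult_le:
  fixes \<phi> :: "('e \<Rightarrow> real \<Rightarrow> real) \<Rightarrow> 'z \<Rightarrow> real"
  assumes finZ: "finite Z"
    and rep: "\<And>g. solves G lam g \<Longrightarrow> \<forall>e\<in>edges G. \<forall>x\<in>{0..len G e}. g e x = (\<Sum>z\<in>Z. \<phi> g z * B z e x)"
  shows "mult G lam \<le> card Z"
proof -
  have "0 \<in> msol G lam" by (auto simp: msol_def lin_indep_def intro!: exI[of _ "[]"])
  then show ?thesis unfolding mult_msol
    using msol_bound[OF finZ rep] by (intro cSup_least) auto
qed

lemma mult_ge:
  fixes \<phi> :: "('e \<Rightarrow> real \<Rightarrow> real) \<Rightarrow> 'z \<Rightarrow> real"
  assumes finZ: "finite Z"
    and rep: "\<And>g. solves G lam g \<Longrightarrow> \<forall>e\<in>edges G. \<forall>x\<in>{0..len G e}. g e x = (\<Sum>z\<in>Z. \<phi> g z * B z e x)"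
    and gs: "\<forall>g\<in>set gs. solves G lam g" "lin_indep G gs"
  shows "length gs \<le> mult G lam"
proof -
  have "length gs \<in> msol G lam" using gs by (auto simp: msol_def)
  moreover have "bdd_above (msol G lam)"
    using msol_bound[OF finZ rep] by (auto simp: bdd_above_def)
  ultimately show ?thesis unfolding mult_msol by (rule cSup_upper)
qed

lemma lin_indep_single:
  assumes "is_eigenfunction G lam g"
  shows "lin_indep G [g]"
proof -
  obtain e x where ex: "e \<in> edges G" "x \<in> {0..len G e}" "g e x \<noteq> 0"
    using assms by (auto simp: is_eigenfunction_def)
  show ?thesis unfolding lin_indep_def
  proof (rule allI, rule impI)
    fix c :: "nat \<Rightarrow> real"
    assume "\<forall>e\<in>edges G. \<forall>x\<in>{0..len G e}. (\<Sum>i<length [g]. c i * ([g] ! i) e x) = 0"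
    then have "c 0 * g e x = 0" using ex by auto
    then show "\<forall>i<length [g]. c i = 0" using ex by auto
  qed
qed

lemma mult_not_eig:
  assumes "\<not> eigenvalue G lam"
  shows "mult G lam = 0"
proof -
  have "mult G lam \<le> card ({} :: nat set)"
    using assms by (intro mult_le[of "{}::nat set" G lam "\<lambda>_ _. 0" "\<lambda>_ _ _. 0"])
      (auto simp: eigenvalue_def is_eigenfunction_def)
  then show ?thesis by simp
qed


context spec
begin

lemma pole_set_ne: "q \<in> Q \<Longrightarrow> {e\<in>P. cos (q * l e) = 0} \<noteq> {}"
  by (auto simp: Q_def)

lemma F_split:
  assumes "q \<in> Q"
  shows "F = (\<lambda>\<mu>. (\<Sum>e\<in>P - {e\<in>P. cos (q * l e) = 0}. tan (\<mu> * l e)) + (\<Sum>e\<in>{e\<in>P. cos (q * l e) = 0}. tan (\<mu> * l e)))"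
  unfolding F_def by (rule ext, rule sum.subset_diff) (auto simp: finP)

lemma rest_tendsto:
  assumes "q \<in> Q"
  shows "((\<lambda>\<mu>. \<Sum>e\<in>P - {e\<in>P. cos (q * l e) = 0}. tan (\<mu> * l e)) \<longlongrightarrow>
           (\<Sum>e\<in>P - {e\<in>P. cos (q * l e) = 0}. tan (q * l e))) (at q within S)"
  by (intro tendsto_intros) auto

lemma lim_left:
  assumes "q \<in> Q"
  shows "filterlim F at_top (at_left q)"
proof -
  let ?Pq = "{e\<in>P. cos (q * l e) = 0}"
  have q0: "0 < q" "q < k" using assms Q_sub by auto
  have "filterlim (\<lambda>\<mu>. \<Sum>e\<in>?Pq. tan (\<mu> * l e)) at_top (at_left q)"
  proof (rule sum_at_top)
    show "finite ?Pq" using finP by simp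
    show "?Pq \<noteq> {}" using pole_set_ne[OF assms] .
    fix e assume e: "e \<in> ?Pq"
    have lp: "l e > 0" using e lpos by auto
    have qe: "q * l e = pi/2" using e pole_iff[of e q] q0 by auto
    have "filterlim (\<lambda>\<mu>. \<mu> * l e) (at_left (pi/2)) (at_left q)"
    proof (rule filterlim_at_withinI)
      have "((\<lambda>\<mu>. \<mu> * l e) \<longlongrightarrow> q * l e) (at_left q)" by (intro tendsto_intros)
      then show "filterlim (\<lambda>\<mu>. \<mu> * l e) (nhds (pi/2)) (at_left q)" using qe by simp
      have "eventually (\<lambda>\<mu>. \<mu> \<in> {0<..<q}) (at_left q)" using q0 by (intro eventually_at_left_real) 
      then show "eventually (\<lambda>\<mu>. \<mu> * l e \<in> {..<pi/2} - {pi/2}) (at_left q)"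
      proof (rule eventually_mono)
        fix \<mu> assume "\<mu> \<in> {0<..<q::real}"
        then have "\<mu> * l e < q * l e" using lp by simp
        then show "\<mu> * l e \<in> {..<pi/2} - {pi/2}" using qe by simp
      qed
    qed
    then show "filterlim (\<lambda>\<mu>. tan (\<mu> * l e)) at_top (at_left q)"
      by (rule filterlim_compose[OF filterlim_tan_at_left])
  qed
  then have "filterlim (\<lambda>\<mu>. (\<Sum>e\<in>P - ?Pq. tan (\<mu> * l e)) + (\<Sum>e\<in>?Pq. tan (\<mu> * l e))) at_top (at_left q)"
    by (rule filterlim_tendsto_add_at_top[OF rest_tendsto[OF assms]])
  then show ?thesis using F_split[OF assms] by simp
qed

lemma lim_right:
  assumes "q \<in> Q"
  shows "filterlim F at_bot (at_right q)"
proof -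
  let ?Pq = "{e\<in>P. cos (q * l e) = 0}"
  have q0: "0 < q" "q < k" using assms Q_sub by auto
  have "filterlim (\<lambda>\<mu>. \<Sum>e\<in>?Pq. tan (pi - \<mu> * l e)) at_top (at_right q)"
  proof (rule sum_at_top)
    show "finite ?Pq" using finP by simp
    show "?Pq \<noteq> {}" using pole_set_ne[OF assms] .
    fix e assume e: "e \<in> ?Pq"
    have lp: "l e > 0" using e lpos by auto
    have qe: "q * l e = pi/2" using e pole_iff[of e q] q0 by auto
    have "filterlim (\<lambda>\<mu>. pi - \<mu> * l e) (at_left (pi/2)) (at_right q)"
    proof (rule filterlim_at_withinI)
      have "((\<lambda>\<mu>. pi - \<mu> * l e) \<longlongrightarrow> pi - q * l e) (at_right q)" by (intro tendsto_intros)
      then show "filterlim (\<lambda>\<mu>. pi - \<mu> * l e) (nhds (pi/2)) (at_right q)" using qe by simp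
      have "eventually (\<lambda>\<mu>. \<mu> \<in> {q<..<q+1}) (at_right q)" by (intro eventually_at_right_real) simp
      then show "eventually (\<lambda>\<mu>. pi - \<mu> * l e \<in> {..<pi/2} - {pi/2}) (at_right q)"
      proof (rule eventually_mono)
        fix \<mu> assume "\<mu> \<in> {q<..<q+1::real}"
        then have "\<mu> * l e > q * l e" using lp by simp
        then show "pi - \<mu> * l e \<in> {..<pi/2} - {pi/2}" using qe by simp
      qed
    qed
    then show "filterlim (\<lambda>\<mu>. tan (pi - \<mu> * l e)) at_top (at_right q)"
      by (rule filterlim_compose[OF filterlim_tan_at_left])
  qed
  then have "filterlim (\<lambda>\<mu>. - (\<Sum>e\<in>P - ?Pq. tan (\<mu> * l e)) + (\<Sum>e\<in>?Pq. tan (pi - \<mu> * l e))) at_top (at_right q)"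
    by (rule filterlim_tendsto_add_at_top[OF tendsto_minus[OF rest_tendsto[OF assms]]])
  moreover have "tan (pi - x) = - tan x" for x
    using tan_periodic_pi[of "-x"] by simp
  ultimately have "filterlim (\<lambda>\<mu>. - F \<mu>) at_top (at_right q)"
    using F_split[OF assms] by (simp add: sum_negf)
  then show ?thesis by (simp add: filterlim_uminus_at_bot)
qed

lemma F_cont:
  assumes "\<forall>\<mu>\<in>S. \<forall>e\<in>P. cos (\<mu> * l e) \<noteq> 0"
  shows "continuous_on S F"
  unfolding F_def
  using assms by (intro continuous_intros) auto

lemma F_root:
  assumes q1: "q1 \<in> Q" and q2: "q2 \<in> Q" and lt: "q1 < q2"
    and between: "\<forall>q\<in>Q. \<not> (q1 < q \<and> q < q2)"
  shows "\<exists>r. q1 < r \<and> r < q2 \<and> F r = 0"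
proof -
  have q10: "0 < q1" "q2 < k" using q1 q2 Q_sub by auto
  have noq: "x \<notin> Q" if "q1 < x" "x < q2" for x using between that by auto
  have nz: "cos (x * l e) \<noteq> 0" if "q1 < x" "x < q2" "e \<in> P" for x e
    using nopole[of x e] noq[OF that(1,2)] that q10 by auto
  have ev1: "eventually (\<lambda>x. 1 \<le> F x) (at_left q2)"
    using lim_left[OF q2] by (simp add: filterlim_at_top)
  have ev2: "eventually (\<lambda>x. x \<in> {q1<..<q2}) (at_left q2)"
    using lt by (intro eventually_at_left_real)
  obtain y where y: "1 \<le> F y" "y \<in> {q1<..<q2}"
    using eventually_happens'[OF _ eventually_conj[OF ev1 ev2]] by auto
  have ev3: "eventually (\<lambda>x. F x \<le> -1) (at_right q1)"
    using lim_right[OF q1] by (simp add: filterlim_at_bot)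
  have ev4: "eventually (\<lambda>x. x \<in> {q1<..<q2}) (at_right q1)"
    using lt by (intro eventually_at_right_real)
  obtain x where x: "F x \<le> -1" "x \<in> {q1<..<q2}"
    using eventually_happens'[OF _ eventually_conj[OF ev3 ev4]] by auto
  have "x \<le> y"
  proof (rule ccontr)
    assume "\<not> x \<le> y"
    then have "F y < F x"
      using x y q10 nz by (intro F_mono) auto
    then show False using x y by simp
  qed
  moreover have "continuous_on {x..y} F"
    using x y nz by (intro F_cont) auto
  ultimately obtain r where "x \<le> r" "r \<le> y" "F r = 0"
    using IVT'[of F x 0 y] x y by auto
  then show ?thesis using x y by (intro exI[of _ r]) auto
qed

end

context spec
begin

lemma R_props:
  assumes "r \<in> R"
  shows "Min Q < r" "r < Max Q" "0 < r" "r < k" "r \<notin> Q" "F r = 0"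
proof -
  show r: "0 < r" "r < k" "r \<notin> Q" "F r = 0" using assms by (auto simp: R_def)
  show "Min Q < r"
  proof (rule ccontr)
    assume "\<not> Min Q < r"
    moreover have "Min Q \<in> Q" using finQ neQ by simp
    ultimately have "r < Min Q" using r by (cases "r = Min Q") auto
    then show False using F_pos[of r] r by simp
  qed
  show "r < Max Q"
  proof (rule ccontr)
    assume "\<not> r < Max Q"
    moreover have "Max Q \<in> Q" using finQ neQ by simp
    ultimately have "Max Q < r" using r by (cases "r = Max Q") auto
    then show False using F_neg[of r] r by simp
  qed
qed

definition nextp where "nextp r = Min {q\<in>Q. r < q}"

lemma nextp_props:
  assumes "r \<in> R"
  shows "nextp r \<in> Q" "r < nextp r" "\<And>q. q \<in> Q \<Longrightarrow> r < q \<Longrightarrow> nextp r \<le> q"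
proof -
  have ne: "{q\<in>Q. r < q} \<noteq> {}" using R_props(2)[OF assms] finQ neQ Max_in by blast
  have fin: "finite {q\<in>Q. r < q}" using finQ by simp
  show "nextp r \<in> Q" "r < nextp r" using Min_in[OF fin ne] by (auto simp: nextp_def)
  show "\<And>q. q \<in> Q \<Longrightarrow> r < q \<Longrightarrow> nextp r \<le> q" using fin by (auto simp: nextp_def)
qed

lemma bij_R: "bij_betw nextp R (Q - {Min Q})"
proof (rule bij_betw_imageI)
  show "inj_on nextp R"
  proof (rule inj_onI, rule ccontr)
    fix r1 r2 assume r1: "r1 \<in> R" and r2: "r2 \<in> R" and eq: "nextp r1 = nextp r2" and ne: "r1 \<noteq> r2"
    have main: False if a: "a \<in> R" "b \<in> R" "nextp a = nextp b" "a < b" for a b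
    proof -
      have "F a < F b"
      proof (rule F_mono)
        show "0 \<le> a" "a < b" "b \<le> k" using R_props[OF a(1)] R_props[OF a(2)] a by auto
        show "\<forall>\<mu>\<in>{a..b}. \<forall>e\<in>P. cos (\<mu> * l e) \<noteq> 0"
        proof (intro ballI)
          fix \<mu> e assume mu: "\<mu> \<in> {a..b}" and e: "e \<in> P"
          have "\<mu> \<notin> Q"
          proof
            assume mQ: "\<mu> \<in> Q"
            then have "a < \<mu>" using mu R_props(5)[OF a(1)] by (cases "a = \<mu>") auto
            then have "nextp a \<le> \<mu>" using nextp_props(3)[OF a(1) mQ] by simp
            moreover have "b < nextp b" using nextp_props(2)[OF a(2)] .
            ultimately show False using mu a(3) by simp
          qed
          then show "cos (\<mu> * l e) \<noteq> 0"
            using nopole[of \<mu> e] mu e R_props[OF a(1)] R_props[OF a(2)] by auto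
        qed
      qed
      then show False using R_props(6)[OF a(1)] R_props(6)[OF a(2)] by simp
    qed
    show False
    proof (cases "r1 < r2")
      case True then show ?thesis using main[OF r1 r2 eq] by simp
    next
      case False then have "r2 < r1" using ne by simp
      then show ?thesis using main[OF r2 r1 eq[symmetric]] by simp
    qed
  qed
  show "nextp ` R = Q - {Min Q}"
  proof (intro set_eqI iffI)
    fix q assume "q \<in> nextp ` R"
    then obtain r where r: "r \<in> R" "q = nextp r" by auto
    then show "q \<in> Q - {Min Q}" using nextp_props[OF r(1)] R_props[OF r(1)] by auto
  next
    fix q assume q: "q \<in> Q - {Min Q}"
    have minq: "Min Q < q" using q finQ by (metis DiffD1 DiffD2 Min_le insertI1 order_le_neq_trans)
    let ?S = "{q'\<in>Q. q' < q}"
    have finS: "finite ?S" using finQ by simp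
    have neS: "?S \<noteq> {}" using minq finQ neQ Min_in by blast
    define q1 where "q1 = Max ?S"
    have q1: "q1 \<in> Q" "q1 < q" using Max_in[OF finS neS] by (auto simp: q1_def)
    have q1max: "\<And>q'. q' \<in> Q \<Longrightarrow> q' < q \<Longrightarrow> q' \<le> q1" using finS by (auto simp: q1_def)
    have betw: "\<forall>q'\<in>Q. \<not> (q1 < q' \<and> q' < q)" using q1max by force
    obtain r where r: "q1 < r" "r < q" "F r = 0" using F_root[OF q1(1) _ q1(2) betw] q by auto
    have rQ: "r \<notin> Q" using betw r by auto
    have rR: "r \<in> R" using r rQ Q_sub[OF q1(1)] Q_sub[of q] q by (auto simp: R_def)
    have "nextp r = q"
    proof (rule antisym)
      show "nextp r \<le> q" using nextp_props(3)[OF rR, of q] q r by auto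
      show "q \<le> nextp r"
      proof (rule ccontr)
        assume "\<not> q \<le> nextp r"
        then have "nextp r < q" by simp
        then have "nextp r \<le> q1" using q1max nextp_props(1)[OF rR] by simp
        then show False using nextp_props(2)[OF rR] r by simp
      qed
    qed
    then show "q \<in> nextp ` R" using rR by force
  qed
qed

lemma finR: "finite R"
  using bij_betw_finite[OF bij_R] finQ by simp

lemma card_R: "card R + 1 = card Q"
proof -
  have "card R = card (Q - {Min Q})" using bij_betw_same_card[OF bij_R] .
  also have "\<dots> = card Q - 1" using finQ neQ by (simp add: card_Diff_singleton)
  finally show ?thesis using finQ neQ by (metis Suc_eq_plus1 card_gt_0_iff Suc_pred')
qed

end

locale stargr =
  fixes H :: "('v,'e) mgraph" and c :: 'v
  assumes wf: "wf_graph H" and cin: "c \<in> verts H" and ne: "edges H \<noteq> {}"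
    and st: "\<forall>e\<in>edges H. (fst (ends H e) = c \<and> snd (ends H e) \<noteq> c) \<or> (snd (ends H e) = c \<and> fst (ends H e) \<noteq> c)"
    and leaves: "\<forall>v\<in>verts H - {c}. deg H v = 1"
begin

definition lb where "lb e = (fst (ends H e) = c)"
definition t0 where "t0 e = (if lb e then len H e else 0)"

lemma finE: "finite (edges H)" using wf by (simp add: wf_graph_def)
lemma lenpos: "e \<in> edges H \<Longrightarrow> len H e > 0" using wf by (simp add: wf_graph_def)
lemma t0_in: "e \<in> edges H \<Longrightarrow> t0 e \<in> {0..len H e}" using lenpos[of e] by (auto simp: t0_def)

lemma endpt_center: "e \<in> edges H \<Longrightarrow> endpt H e (\<not> lb e) = c"
  using st by (auto simp: endpt_def lb_def)

lemma endpt_leaf: "e \<in> edges H \<Longrightarrow> endpt H e (lb e) \<noteq> c"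
  using st by (auto simp: endpt_def lb_def)

lemma endpt_in: "e \<in> edges H \<Longrightarrow> endpt H e b \<in> verts H"
  using wf by (auto simp: endpt_def wf_graph_def)

lemma endpt_noncenter: "e \<in> edges H \<Longrightarrow> endpt H e b \<noteq> c \<Longrightarrow> b = lb e"
  using endpt_center[of e] by (cases b; cases "lb e") auto

lemma ends_at_c: "ends_at H c = (\<lambda>e. (e, \<not> lb e)) ` edges H"
proof (intro set_eqI iffI)
  fix p assume "p \<in> ends_at H c"
  then obtain e b where p: "p = (e, b)" "e \<in> edges H" "endpt H e b = c" by (auto simp: ends_at_def)
  then have "b = (\<not> lb e)" using endpt_leaf[of e] by (cases b; cases "lb e") auto
  then show "p \<in> (\<lambda>e. (e, \<not> lb e)) ` edges H" using p by auto
qed (auto simp: ends_at_def endpt_center)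

lemma center_sum: "(\<Sum>p\<in>ends_at H c. f p) = (\<Sum>e\<in>edges H. f (e, \<not> lb e))"
  unfolding ends_at_c by (rule sum.reindex_cong[of "\<lambda>e. (e, \<not> lb e)"]) (auto simp: inj_on_def)

lemma leaf_ends:
  assumes "v \<in> verts H" "v \<noteq> c"
  shows "\<exists>e. e \<in> edges H \<and> ends_at H v = {(e, lb e)} \<and> endpt H e (lb e) = v"
proof -
  have "card (ends_at H v) = 1" using leaves assms by (auto simp: deg_def)
  then obtain p where p: "ends_at H v = {p}" by (auto simp: card_1_singleton_iff)
  then have "p \<in> ends_at H v" by simp
  then obtain e b where eb: "p = (e, b)" "e \<in> edges H" "endpt H e b = v" by (auto simp: ends_at_def)
  then have "b = lb e" using endpt_noncenter assms by auto
  then show ?thesis using p eb by auto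
qed

lemma leaf_of_edge:
  assumes "e \<in> edges H"
  shows "ends_at H (endpt H e (lb e)) = {(e, lb e)}"
proof -
  obtain e' where e': "e' \<in> edges H" "ends_at H (endpt H e (lb e)) = {(e', lb e')}"
    using leaf_ends[OF endpt_in[OF assms] endpt_leaf[OF assms]] by auto
  moreover have "(e, lb e) \<in> ends_at H (endpt H e (lb e))" using assms by (auto simp: ends_at_def)
  ultimately show ?thesis by auto
qed

lemma Dv_leaf_zero:
  assumes "solves H lam g" "e \<in> edges H"
  shows "Dv H g e (t0 e) = 0"
proof -
  have "(\<Sum>p\<in>ends_at H (endpt H e (lb e)). outder H g (fst p) (snd p)) = 0"
    using assms endpt_in[OF assms(2)] by (auto simp: solves_def)
  then have "outder H g e (lb e) = 0" using leaf_of_edge[OF assms(2)] by simp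
  then show ?thesis by (auto simp: outder_def t0_def split: if_splits)
qed

lemma sol_rep:
  assumes sol: "solves H lam g" and lam: "lam \<ge> 0" and e: "e \<in> edges H" and t: "t \<in> {0..len H e}"
  shows "g e t = g e (t0 e) * cos (sqrt lam * (t - t0 e)) \<and>
         Dv H g e t = - g e (t0 e) * sqrt lam * sin (sqrt lam * (t - t0 e))"
proof -
  have d1: "(g e has_real_derivative Dv H g e x) (at x within {0..len H e})" if "x \<in> {0..len H e}" for x
    using sol e that by (auto simp: solves_def has_real_derivative_iff_has_vector_derivative)
  have d2: "(Dv H g e has_real_derivative (- lam * g e x)) (at x within {0..len H e})" if "x \<in> {0..len H e}" for x
    using sol e that by (auto simp: solves_def has_real_derivative_iff_has_vector_derivative)
  show ?thesis using ode_rep[OF d1 d2 lam t0_in[OF e] Dv_leaf_zero[OF sol e]] t by blast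
qed

lemma center_val:
  assumes sol: "solves H lam g" and lam: "lam \<ge> 0" and e: "e \<in> edges H"
  shows "endval H g e (\<not> lb e) = g e (t0 e) * cos (sqrt lam * len H e)"
  using sol_rep[OF sol lam e, of "if lb e then 0 else len H e"] lenpos[OF e]
  by (auto simp: endval_def t0_def)

lemma center_der:
  assumes sol: "solves H lam g" and lam: "lam \<ge> 0" and e: "e \<in> edges H"
  shows "outder H g e (\<not> lb e) = g e (t0 e) * sqrt lam * sin (sqrt lam * len H e)"
  using sol_rep[OF sol lam e, of "if lb e then 0 else len H e"] lenpos[OF e]
  by (auto simp: outder_def t0_def)

lemma center_cont:
  assumes sol: "solves H lam g" and e: "e \<in> edges H" and e': "e' \<in> edges H"
  shows "endval H g e (\<not> lb e) = endval H g e' (\<not> lb e')"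
proof -
  have "(e, \<not> lb e) \<in> ends_at H c" "(e', \<not> lb e') \<in> ends_at H c" using e e' ends_at_c by auto
  moreover have "\<forall>p\<in>ends_at H c. \<forall>q\<in>ends_at H c. endval H g (fst p) (snd p) = endval H g (fst q) (snd q)"
    using sol cin unfolding solves_def by blast
  ultimately show ?thesis by fastforce
qed

lemma center_kirch:
  assumes sol: "solves H lam g"
  shows "(\<Sum>e\<in>edges H. outder H g e (\<not> lb e)) = 0"
proof -
  have "(\<Sum>p\<in>ends_at H c. outder H g (fst p) (snd p)) = 0" using sol cin by (auto simp: solves_def)
  then show ?thesis using center_sum[of "\<lambda>p. outder H g (fst p) (snd p)"] by simp
qed

definition mk :: "('e \<Rightarrow> real) \<Rightarrow> real \<Rightarrow> 'e \<Rightarrow> real \<Rightarrow> real" where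
  "mk A \<mu> e t = A e * cos (\<mu> * (t - t0 e))"

lemma mk_Dv:
  assumes e: "e \<in> edges H" and t: "t \<in> {0..len H e}"
  shows "Dv H (mk A \<mu>) e t = - A e * \<mu> * sin (\<mu> * (t - t0 e))"
proof -
  have "(mk A \<mu> e has_real_derivative (- A e * \<mu> * sin (\<mu> * (t - t0 e)))) (at t within {0..len H e})"
    unfolding mk_def by (auto intro!: derivative_eq_intros)
  then show ?thesis unfolding Dv_def
    using lenpos[OF e] t by (intro vector_derivative_within_closed_interval) (auto simp: has_real_derivative_iff_has_vector_derivative)
qed

lemma mk_solves:
  assumes mu: "\<mu> \<ge> 0"
    and C1: "\<And>e e'. e \<in> edges H \<Longrightarrow> e' \<in> edges H \<Longrightarrow> A e * cos (\<mu> * len H e) = A e' * cos (\<mu> * len H e')"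
    and C2: "(\<Sum>e\<in>edges H. A e * sin (\<mu> * len H e)) = 0"
  shows "solves H (\<mu>\<^sup>2) (mk A \<mu>)"
  unfolding solves_def
proof (intro conjI ballI)
  fix e x assume e: "e \<in> edges H" and x: "x \<in> {0..len H e}"
  have "(mk A \<mu> e has_real_derivative (- A e * \<mu> * sin (\<mu> * (x - t0 e)))) (at x within {0..len H e})"
    unfolding mk_def by (auto intro!: derivative_eq_intros)
  then show "(mk A \<mu> e has_vector_derivative Dv H (mk A \<mu>) e x) (at x within {0..len H e})"
    using mk_Dv[OF e x] by (simp add: has_real_derivative_iff_has_vector_derivative)
  have "((\<lambda>t. - A e * \<mu> * sin (\<mu> * (t - t0 e))) has_real_derivative (- \<mu>\<^sup>2 * mk A \<mu> e x)) (at x within {0..len H e})"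
    unfolding mk_def by (auto intro!: derivative_eq_intros simp: power2_eq_square)
  then show "(Dv H (mk A \<mu>) e has_vector_derivative (- \<mu>\<^sup>2 * mk A \<mu> e x)) (at x within {0..len H e})"
    unfolding has_real_derivative_iff_has_vector_derivative
    by (rule has_vector_derivative_transform[OF x, rotated]) (simp add: mk_Dv[OF e])
next
  fix v p q assume v: "v \<in> verts H" and p: "p \<in> ends_at H v" and q: "q \<in> ends_at H v"
  show "endval H (mk A \<mu>) (fst p) (snd p) = endval H (mk A \<mu>) (fst q) (snd q)"
  proof (cases "v = c")
    case True
    then obtain e e' where "p = (e, \<not> lb e)" "q = (e', \<not> lb e')" "e \<in> edges H" "e' \<in> edges H"
      using p q ends_at_c by auto
    then show ?thesis using C1[of e e'] by (auto simp: endval_def mk_def t0_def)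
  next
    case False
    then show ?thesis using leaf_ends[OF v] p q by auto
  qed
next
  fix v assume v: "v \<in> verts H"
  show "(\<Sum>p\<in>ends_at H v. outder H (mk A \<mu>) (fst p) (snd p)) = 0"
  proof (cases "v = c")
    case True
    have "(\<Sum>e\<in>edges H. outder H (mk A \<mu>) e (\<not> lb e)) = (\<Sum>e\<in>edges H. \<mu> * (A e * sin (\<mu> * len H e)))"
    proof (rule sum.cong[OF refl])
      fix e assume e: "e \<in> edges H"
      show "outder H (mk A \<mu>) e (\<not> lb e) = \<mu> * (A e * sin (\<mu> * len H e))"
        using mk_Dv[OF e, of 0] mk_Dv[OF e, of "len H e"] lenpos[OF e]
        by (auto simp: outder_def t0_def)
    qed
    also have "\<dots> = 0" using C2 by (simp add: sum_distrib_left[symmetric])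
    finally show ?thesis using True center_sum[of "\<lambda>p. outder H (mk A \<mu>) (fst p) (snd p)"] by simp
  next
    case False
    then obtain e where e: "e \<in> edges H" "ends_at H v = {(e, lb e)}" using leaf_ends[OF v] by auto
    then show ?thesis
      using mk_Dv[OF e(1), of 0] mk_Dv[OF e(1), of "len H e"] lenpos[OF e(1)]
      by (auto simp: outder_def t0_def)
  qed
qed

end

locale stark = stargr H c for H :: "('v,'e) mgraph" and c +
  fixes k :: real and g :: "'e \<Rightarrow> real \<Rightarrow> real"
  assumes kpos: "k > 0" and gsol: "solves H (k\<^sup>2) g"
    and gval: "\<forall>e\<in>edges H. \<forall>b. endval H g e b \<noteq> 0"
    and gnoN: "\<forall>e\<in>edges H. \<forall>t. 0 < t \<and> t < len H e \<longrightarrow> Dv H g e t \<noteq> 0"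
begin

lemma sqk: "sqrt (k\<^sup>2) = k" using kpos by simp

lemma A_nz: "e \<in> edges H \<Longrightarrow> g e (t0 e) \<noteq> 0"
  using gval by (force simp: endval_def t0_def)

lemma grep: "e \<in> edges H \<Longrightarrow> t \<in> {0..len H e} \<Longrightarrow>
   g e t = g e (t0 e) * cos (k * (t - t0 e)) \<and> Dv H g e t = - g e (t0 e) * k * sin (k * (t - t0 e))"
  using sol_rep[OF gsol _ _, of e t] sqk by simp

lemma klen: "e \<in> edges H \<Longrightarrow> k * len H e \<le> pi"
proof (rule ccontr)
  assume e: "e \<in> edges H" and "\<not> k * len H e \<le> pi"
  then have big: "pi / k < len H e" using kpos by (simp add: field_simps)
  define t1 where "t1 = (if lb e then len H e - pi / k else pi / k)"
  have t1: "0 < t1" "t1 < len H e" using big kpos by (auto simp: t1_def)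
  have "k * (t1 - t0 e) = (if lb e then - pi else pi)" using kpos by (auto simp: t1_def t0_def field_simps)
  then have "sin (k * (t1 - t0 e)) = 0" by (auto)
  then have "Dv H g e t1 = 0" using grep[OF e, of t1] t1 by simp
  then show False using gnoN e t1 by auto
qed

lemma cklen: "e \<in> edges H \<Longrightarrow> cos (k * len H e) \<noteq> 0"
  using center_val[OF gsol _, of e] gval sqk by force

definition gam where "gam = endval H g (SOME e. e \<in> edges H) (\<not> lb (SOME e. e \<in> edges H))"

lemma e0: "(SOME e. e \<in> edges H) \<in> edges H" using ne by (simp add: some_in_eq)

lemma gam_eq: "e \<in> edges H \<Longrightarrow> g e (t0 e) * cos (k * len H e) = gam"
  using center_val[OF gsol _, of e] center_cont[OF gsol _ e0, of e] sqk by (simp add: gam_def)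

lemma gam_nz: "gam \<noteq> 0" using gval e0 by (simp add: gam_def)

lemma Fk: "(\<Sum>e\<in>edges H. tan (k * len H e)) = 0"
proof -
  have "(\<Sum>e\<in>edges H. outder H g e (\<not> lb e)) = 0" by (rule center_kirch[OF gsol])
  then have "(\<Sum>e\<in>edges H. k * (g e (t0 e) * sin (k * len H e))) = 0"
    using center_der[OF gsol] sqk by (simp add: mult_ac)
  then have s0: "(\<Sum>e\<in>edges H. g e (t0 e) * sin (k * len H e)) = 0"
    using kpos by (simp add: sum_distrib_left[symmetric])
  have "(\<Sum>e\<in>edges H. tan (k * len H e)) = (\<Sum>e\<in>edges H. g e (t0 e) * sin (k * len H e) / gam)"
  proof (rule sum.cong[OF refl])
    fix e assume e: "e \<in> edges H"
    show "tan (k * len H e) = g e (t0 e) * sin (k * len H e) / gam"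
      unfolding gam_eq[OF e, symmetric] using cklen[OF e] A_nz[OF e] by (auto simp: tan_def field_simps)
  qed
  also have "\<dots> = 0" using s0 by (simp add: sum_divide_distrib[symmetric])
  finally show ?thesis .
qed

end

sublocale stark \<subseteq> spec "edges H" "len H" k
  using finE ne lenpos kpos klen cklen Fk by unfold_locales auto

context stark
begin

lemma sol_rep2:
  assumes "solves H (\<mu>\<^sup>2) h" "\<mu> \<ge> 0" "e \<in> edges H" "x \<in> {0..len H e}"
  shows "h e x = h e (t0 e) * cos (\<mu> * (x - t0 e))"
  using sol_rep[OF assms(1) _ assms(3,4)] assms(2) by simp

lemma cval2:
  assumes "solves H (\<mu>\<^sup>2) h" "\<mu> \<ge> 0" "e \<in> edges H"
  shows "h e (t0 e) * cos (\<mu> * len H e) = endval H h (SOME e. e \<in> edges H) (\<not> lb (SOME e. e \<in> edges H))"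
  using center_val[OF assms(1) _ assms(3)] center_cont[OF assms(1) assms(3) e0] assms(2) by simp

lemma ckir2:
  assumes "solves H (\<mu>\<^sup>2) h" "\<mu> > 0"
  shows "(\<Sum>e\<in>edges H. h e (t0 e) * sin (\<mu> * len H e)) = 0"
proof -
  have "(\<Sum>e\<in>edges H. outder H h e (\<not> lb e)) = 0" by (rule center_kirch[OF assms(1)])
  then have "(\<Sum>e\<in>edges H. \<mu> * (h e (t0 e) * sin (\<mu> * len H e))) = 0"
    using center_der[OF assms(1)] assms(2) by (simp add: mult_ac)
  then show ?thesis using assms(2) by (simp add: sum_distrib_left[symmetric])
qed

lemma np_rep:
  assumes mu: "\<mu> \<ge> 0" and nz: "\<forall>e\<in>edges H. cos (\<mu> * len H e) \<noteq> 0"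
    and h: "solves H (\<mu>\<^sup>2) h"
  shows "\<forall>e\<in>edges H. \<forall>x\<in>{0..len H e}. h e x = (\<Sum>z\<in>{0::nat}.
     endval H h (SOME e. e \<in> edges H) (\<not> lb (SOME e. e \<in> edges H)) * (cos (\<mu> * (x - t0 e)) / cos (\<mu> * len H e)))"
proof (intro ballI)
  fix e x assume e: "e \<in> edges H" and x: "x \<in> {0..len H e}"
  show "h e x = (\<Sum>z\<in>{0::nat}. endval H h (SOME e. e \<in> edges H) (\<not> lb (SOME e. e \<in> edges H)) * (cos (\<mu> * (x - t0 e)) / cos (\<mu> * len H e)))"
    using sol_rep2[OF h mu e x] cval2[OF h mu e, symmetric] nz e by (simp add: field_simps)
qed

lemma np_le1:
  assumes mu: "\<mu> \<ge> 0" and nz: "\<forall>e\<in>edges H. cos (\<mu> * len H e) \<noteq> 0"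
  shows "mult H (\<mu>\<^sup>2) \<le> 1"
  using mult_le[OF _ np_rep[OF mu nz]] by simp

lemma np_ge1:
  assumes mu: "\<mu> \<ge> 0" and nz: "\<forall>e\<in>edges H. cos (\<mu> * len H e) \<noteq> 0"
    and F0: "(\<Sum>e\<in>edges H. tan (\<mu> * len H e)) = 0"
  shows "1 \<le> mult H (\<mu>\<^sup>2)"
proof -
  define A where "A e = 1 / cos (\<mu> * len H e)" for e
  have sol: "solves H (\<mu>\<^sup>2) (mk A \<mu>)"
  proof (rule mk_solves[OF mu])
    show "\<And>e e'. e \<in> edges H \<Longrightarrow> e' \<in> edges H \<Longrightarrow> A e * cos (\<mu> * len H e) = A e' * cos (\<mu> * len H e')"
      using nz by (simp add: A_def)
    show "(\<Sum>e\<in>edges H. A e * sin (\<mu> * len H e)) = 0"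
      using F0 by (simp add: A_def tan_def)
  qed
  have "is_eigenfunction H (\<mu>\<^sup>2) (mk A \<mu>)"
    unfolding is_eigenfunction_def
  proof (intro conjI sol bexI)
    let ?e = "SOME e. e \<in> edges H"
    show "?e \<in> edges H" by (rule e0)
    show "t0 ?e \<in> {0..len H ?e}" by (rule t0_in[OF e0])
    show "mk A \<mu> ?e (t0 ?e) \<noteq> 0" using nz e0 by (simp add: mk_def A_def)
  qed
  from mult_ge[OF _ np_rep[OF mu nz] _ lin_indep_single[OF this]] sol show ?thesis by simp
qed

lemma np_eig:
  assumes mu: "\<mu> > 0" and nz: "\<forall>e\<in>edges H. cos (\<mu> * len H e) \<noteq> 0"
    and eig: "eigenvalue H (\<mu>\<^sup>2)"
  shows "(\<Sum>e\<in>edges H. tan (\<mu> * len H e)) = 0"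
proof -
  obtain h where h: "is_eigenfunction H (\<mu>\<^sup>2) h" using eig by (auto simp: eigenvalue_def)
  then have hs: "solves H (\<mu>\<^sup>2) h" by (simp add: is_eigenfunction_def)
  define gm where "gm = endval H h (SOME e. e \<in> edges H) (\<not> lb (SOME e. e \<in> edges H))"
  have Aeq: "h e (t0 e) = gm / cos (\<mu> * len H e)" if "e \<in> edges H" for e
    using cval2[OF hs _ that] mu nz that by (simp add: gm_def field_simps)
  have "gm \<noteq> 0"
  proof
    assume "gm = 0"
    then have "\<forall>e\<in>edges H. \<forall>x\<in>{0..len H e}. h e x = 0"
      using sol_rep2[OF hs] Aeq mu by auto
    then show False using h by (auto simp: is_eigenfunction_def)
  qed
  have "(\<Sum>e\<in>edges H. h e (t0 e) * sin (\<mu> * len H e)) = 0" by (rule ckir2[OF hs mu])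
  also have "(\<Sum>e\<in>edges H. h e (t0 e) * sin (\<mu> * len H e)) = gm * (\<Sum>e\<in>edges H. tan (\<mu> * len H e))"
    unfolding sum_distrib_left by (rule sum.cong) (auto simp: Aeq tan_def)
  finally show ?thesis using \<open>gm \<noteq> 0\<close> by simp
qed

end

context stark
begin

definition Zp where "Zp q = {e\<in>edges H. cos (q * len H e) = 0}"
definition z0 where "z0 q = (SOME e. e \<in> Zp q)"

lemma Zp_props:
  assumes q: "q \<in> Q"
  shows "Zp q \<noteq> {}" "finite (Zp q)" "z0 q \<in> Zp q" "m q = card (Zp q)"
    "\<And>e. e \<in> Zp q \<Longrightarrow> sin (q * len H e) = 1"
proof -
  show ne: "Zp q \<noteq> {}" using q by (auto simp: Q_def Zp_def)
  show "finite (Zp q)" using finE by (simp add: Zp_def)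
  show "z0 q \<in> Zp q" using ne by (simp add: z0_def some_in_eq)
  show "m q = card (Zp q)" by (simp add: m_def Zp_def)
  fix e assume e: "e \<in> Zp q"
  have "q * len H e = pi/2" using e q pole_iff[of e q] by (auto simp: Zp_def Q_def)
  then show "sin (q * len H e) = 1" by (metis sin_pi_half)
qed

lemma p_rep:
  assumes q: "q \<in> Q" and h: "solves H (q\<^sup>2) h"
  shows "\<forall>e\<in>edges H. \<forall>x\<in>{0..len H e}. h e x = (\<Sum>z\<in>Zp q - {z0 q}. h z (t0 z) *
      ((if z = e then cos (q * (x - t0 e)) else 0) + (if e = z0 q then - cos (q * (x - t0 e)) else 0)))"
proof (intro ballI)
  fix e x assume e: "e \<in> edges H" and x: "x \<in> {0..len H e}"
  have q0: "0 < q" "q < k" using Q_sub[OF q] by auto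
  note Z = Zp_props[OF q]
  let ?z = "z0 q" and ?C = "cos (q * (x - t0 e))"
  have zero: "h e' (t0 e') = 0" if e': "e' \<in> edges H" "e' \<notin> Zp q" for e'
  proof -
    have "h e' (t0 e') * cos (q * len H e') = h ?z (t0 ?z) * cos (q * len H ?z)"
      using cval2[OF h _ e'(1)] cval2[OF h _, of ?z] Z(3) q0 by (simp add: Zp_def)
    also have "\<dots> = 0" using Z(3) by (simp add: Zp_def)
    finally show ?thesis using e' by (simp add: Zp_def)
  qed
  have sum0: "(\<Sum>e\<in>Zp q. h e (t0 e)) = 0"
  proof -
    have "0 = (\<Sum>e\<in>edges H. h e (t0 e) * sin (q * len H e))" using ckir2[OF h q0(1)] by simp
    also have "\<dots> = (\<Sum>e\<in>Zp q. h e (t0 e) * sin (q * len H e))"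
      by (rule sum.mono_neutral_right) (auto simp: finE zero Zp_def)
    also have "\<dots> = (\<Sum>e\<in>Zp q. h e (t0 e))" using Z(5) by simp
    finally show ?thesis by simp
  qed
  have hx: "h e x = h e (t0 e) * ?C" using sol_rep2[OF h _ e x] q0 by simp
  show "h e x = (\<Sum>z\<in>Zp q - {?z}. h z (t0 z) * ((if z = e then ?C else 0) + (if e = ?z then - ?C else 0)))"
  proof (cases "e = ?z")
    case True
    have "(\<Sum>z\<in>Zp q - {?z}. h z (t0 z) * ((if z = e then ?C else 0) + (if e = ?z then - ?C else 0)))
        = - (\<Sum>z\<in>Zp q - {?z}. h z (t0 z)) * ?C"
      using True by (simp add: sum_distrib_right sum_negf)
    also have "(\<Sum>z\<in>Zp q - {?z}. h z (t0 z)) = - h ?z (t0 ?z)"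
      using sum0 sum.remove[OF Z(2) Z(3), of "\<lambda>e. h e (t0 e)"] by simp
    finally show ?thesis using hx True by simp
  next
    case False
    have "(\<Sum>z\<in>Zp q - {?z}. h z (t0 z) * ((if z = e then ?C else 0) + (if e = ?z then - ?C else 0)))
        = (\<Sum>z\<in>Zp q - {?z}. if z = e then h e (t0 e) * ?C else 0)"
      using False by (intro sum.cong) auto
    also have "\<dots> = (if e \<in> Zp q - {?z} then h e (t0 e) * ?C else 0)"
      using Z(2) by (simp add: sum.delta')
    also have "\<dots> = h e x" using hx zero[OF e] False by auto
    finally show ?thesis by simp
  qed
qed

lemma p_le:
  assumes q: "q \<in> Q"
  shows "mult H (q\<^sup>2) \<le> m q - 1"
proof -
  note Z = Zp_props[OF q]
  have "mult H (q\<^sup>2) \<le> card (Zp q - {z0 q})"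
    by (rule mult_le[OF _ p_rep[OF q]]) (use Z in auto)
  then show ?thesis using Z by (simp add: card_Diff_singleton)
qed

lemma p_ge:
  assumes q: "q \<in> Q"
  shows "m q - 1 \<le> mult H (q\<^sup>2)"
proof -
  note Z = Zp_props[OF q]
  have q0: "0 < q" "q < k" using Q_sub[OF q] by auto
  let ?z = "z0 q" and ?Z = "Zp q - {z0 q}"
  have finZ: "finite ?Z" using Z by simp
  obtain zs where zs: "set zs = ?Z" "distinct zs" using finite_distinct_list[OF finZ] by blast
  define Az where "Az z e = (if e = z then 1 else 0) - (if e = ?z then 1 else (0::real))" for z e
  define gs where "gs = map (\<lambda>z. mk (Az z) q) zs"
  have sols: "\<forall>h\<in>set gs. solves H (q\<^sup>2) h"
  proof
    fix h assume "h \<in> set gs"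
    then obtain z where z: "z \<in> ?Z" "h = mk (Az z) q" using zs by (auto simp: gs_def)
    have zE: "z \<in> edges H" "?z \<in> edges H" using z Z by (auto simp: Zp_def)
    show "solves H (q\<^sup>2) h" unfolding z(2)
    proof (rule mk_solves)
      show "0 \<le> q" using q0 by simp
      have az0: "Az z e * cos (q * len H e) = 0" for e
        using z Z(3) by (auto simp: Az_def Zp_def)
      then show "\<And>e e'. e \<in> edges H \<Longrightarrow> e' \<in> edges H \<Longrightarrow> Az z e * cos (q * len H e) = Az z e' * cos (q * len H e')"
        by (simp only: az0)
      have "(\<Sum>e\<in>edges H. Az z e * sin (q * len H e)) =
            (\<Sum>e\<in>edges H. if e = z then sin (q * len H e) else 0) - (\<Sum>e\<in>edges H. if e = ?z then sin (q * len H e) else 0)"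
        unfolding sum_subtractf[symmetric] by (rule sum.cong) (simp_all add: Az_def left_diff_distrib)
      also have "\<dots> = sin (q * len H z) - sin (q * len H ?z)"
        using zE finE by (simp add: sum.delta')
      also have "\<dots> = 0" using Z(5)[of z] Z(5)[OF Z(3)] z by simp
      finally show "(\<Sum>e\<in>edges H. Az z e * sin (q * len H e)) = 0" .
    qed
  qed
  have li: "lin_indep H gs"
    unfolding lin_indep_def
  proof (rule allI, rule impI, rule allI, rule impI)
    fix cc :: "nat \<Rightarrow> real" and j
    assume hyp: "\<forall>e\<in>edges H. \<forall>x\<in>{0..len H e}. (\<Sum>i<length gs. cc i * (gs ! i) e x) = 0"
      and j: "j < length gs"
    let ?e = "zs ! j"
    have jz: "j < length zs" using j by (simp add: gs_def)
    have ej: "?e \<in> ?Z" using nth_mem[OF jz] zs(1) by blast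
    then have eE: "?e \<in> edges H" by (auto simp: Zp_def)
    have "0 = (\<Sum>i<length gs. cc i * (gs ! i) ?e (t0 ?e))" using hyp[rule_format, OF eE t0_in[OF eE]] by simp
    also have "\<dots> = (\<Sum>i<length gs. if i = j then cc i else 0)"
    proof (rule sum.cong[OF refl])
      fix i assume i: "i \<in> {..<length gs}"
      have "(gs ! i) ?e (t0 ?e) = Az (zs ! i) ?e" using i by (simp add: gs_def mk_def)
      also have "\<dots> = (if i = j then 1 else 0)"
      proof -
        have iz: "i < length zs" using i by (simp add: gs_def)
        have "?e \<noteq> ?z" using ej by simp
        moreover have "(?e = zs ! i) = (j = i)" using nth_eq_iff_index_eq[OF zs(2) jz iz] .
        ultimately show ?thesis unfolding Az_def by auto
      qed
      finally show "cc i * (gs ! i) ?e (t0 ?e) = (if i = j then cc i else 0)" by simp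
    qed
    also have "\<dots> = cc j" using j by simp
    finally show "cc j = 0" by simp
  qed
  have "length gs \<le> mult H (q\<^sup>2)"
    by (rule mult_ge[OF _ p_rep[OF q] sols li]) (use Z in auto)
  moreover have "length gs = m q - 1"
    using zs Z by (simp add: gs_def distinct_card[symmetric] card_Diff_singleton)
  ultimately show ?thesis by simp
qed

end

context stark
begin

lemma mult_k: "mult H (k\<^sup>2) = 1"
  using np_le1[of k] np_ge1[of k] kpos cklen Fk by (auto intro: antisym)

lemma mult_0: "mult H 0 = 1"
  using np_le1[of 0] np_ge1[of 0] by (auto intro: antisym)

lemma mult_R: "r \<in> R \<Longrightarrow> mult H (r\<^sup>2) = 1"
proof -
  assume r: "r \<in> R"
  then have r0: "0 < r" "r < k" "r \<notin> Q" "F r = 0" by (auto simp: R_def)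
  have nz: "\<forall>e\<in>edges H. cos (r * len H e) \<noteq> 0" using nopole r0 by auto
  show ?thesis using np_le1[of r] np_ge1[of r] nz r0 by (auto simp: F_def intro: antisym)
qed

lemma mult_Q: "q \<in> Q \<Longrightarrow> mult H (q\<^sup>2) = m q - 1"
  using p_le p_ge by (auto intro: antisym)

lemma m_pos: "q \<in> Q \<Longrightarrow> m q \<ge> 1"
  using Zp_props[of q] by (simp add: card_gt_0_iff Suc_le_eq)

lemma Ncount_eq: "Ncount H k = card {e\<in>edges H. pi/2 < k * len H e}"
proof -
  define E where "E = {lam. 0 \<le> lam \<and> lam < k\<^sup>2 \<and> eigenvalue H lam}"
  define T where "T = insert 0 (Q \<union> R)"
  have finT: "finite T" using finQ finR by (simp add: T_def)
  have Tr: "\<mu> \<in> T \<Longrightarrow> 0 \<le> \<mu> \<and> \<mu> < k" for \<mu> using kpos by (auto simp: T_def Q_def R_def)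
  have ET: "E \<subseteq> (\<lambda>\<mu>. \<mu>\<^sup>2) ` T"
  proof
    fix lam assume "lam \<in> E"
    then have l: "0 \<le> lam" "lam < k\<^sup>2" "eigenvalue H lam" by (auto simp: E_def)
    define \<mu> where "\<mu> = sqrt lam"
    have lm: "lam = \<mu>\<^sup>2" using l by (simp add: \<mu>_def)
    have m0: "0 \<le> \<mu>" "\<mu> < k" using l kpos by (auto simp: \<mu>_def real_sqrt_less_iff intro: real_less_lsqrt)
    have "\<mu> \<in> T"
    proof (cases "\<mu> = 0 \<or> \<mu> \<in> Q")
      case True then show ?thesis by (auto simp: T_def)
    next
      case False
      then have "0 < \<mu>" "\<mu> \<notin> Q" using m0 by auto
      then have nz: "\<forall>e\<in>edges H. cos (\<mu> * len H e) \<noteq> 0" using nopole m0 by auto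
      then have "F \<mu> = 0" using np_eig[OF \<open>0 < \<mu>\<close> nz] l lm by (simp add: F_def)
      then show ?thesis using \<open>0 < \<mu>\<close> \<open>\<mu> \<notin> Q\<close> m0 by (auto simp: T_def R_def)
    qed
    then show "lam \<in> (\<lambda>\<mu>. \<mu>\<^sup>2) ` T" using lm by auto
  qed
  have "Ncount H k = (\<Sum>lam\<in>E. mult H lam)" by (simp add: Ncount_def E_def)
  also have "\<dots> = (\<Sum>lam\<in>(\<lambda>\<mu>. \<mu>\<^sup>2) ` T. mult H lam)"
  proof (rule sum.mono_neutral_left[OF _ ET])
    show "finite ((\<lambda>\<mu>. \<mu>\<^sup>2) ` T)" using finT by simp
    show "\<forall>i\<in>(\<lambda>\<mu>. \<mu>\<^sup>2) ` T - E. mult H i = 0"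
    proof
      fix lam assume "lam \<in> (\<lambda>\<mu>. \<mu>\<^sup>2) ` T - E"
      then obtain \<mu> where "\<mu> \<in> T" "lam = \<mu>\<^sup>2" "lam \<notin> E" by auto
      moreover have "\<mu>\<^sup>2 < k\<^sup>2" using Tr[OF \<open>\<mu> \<in> T\<close>] by (auto intro: power_strict_mono)
      ultimately have "\<not> eigenvalue H lam" by (auto simp: E_def)
      then show "mult H lam = 0" by (rule mult_not_eig)
    qed
  qed
  also have "\<dots> = (\<Sum>\<mu>\<in>T. mult H (\<mu>\<^sup>2))"
  proof (rule sum.reindex[unfolded comp_def])
    show "inj_on (\<lambda>\<mu>. \<mu>\<^sup>2) T" by (intro inj_onI) (metis Tr power2_eq_iff_nonneg)
  qed
  also have "\<dots> = mult H 0 + (\<Sum>\<mu>\<in>Q. mult H (\<mu>\<^sup>2)) + (\<Sum>\<mu>\<in>R. mult H (\<mu>\<^sup>2))"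
  proof -
    have "0 \<notin> Q \<union> R" by (auto simp: Q_def R_def)
    moreover have "Q \<inter> R = {}" by (auto simp: R_def)
    ultimately show ?thesis using finQ finR by (simp add: T_def sum.union_disjoint)
  qed
  also have "\<dots> = 1 + (\<Sum>q\<in>Q. m q - 1) + card R"
    using mult_0 mult_Q mult_R by simp
  also have "\<dots> = (\<Sum>q\<in>Q. m q)"
  proof -
    have "(\<Sum>q\<in>Q. m q) = (\<Sum>q\<in>Q. (m q - 1) + 1)" using m_pos by (intro sum.cong) (auto simp: Suc_le_eq)
    also have "\<dots> = (\<Sum>q\<in>Q. m q - 1) + card Q" by (subst sum.distrib) simp
    finally show ?thesis using card_R by simp
  qed
  also have "\<dots> = card {e\<in>edges H. pi/2 < k * len H e}" by (rule m_sum)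
  finally show ?thesis .
qed

lemma zeros_edge:
  assumes e: "e \<in> edges H"
  shows "{t. 0 < t \<and> t < len H e \<and> g e t = 0} =
     (if pi/2 < k * len H e then {if lb e then len H e - pi / (2 * k) else pi / (2 * k)} else {})"
proof -
  have lp: "len H e > 0" using lenpos e by simp
  have kl: "k * len H e \<le> pi" using klen e by simp
  have ne: "k * len H e \<noteq> pi/2" using kl_ne e by simp
  define d where "d t = (if lb e then len H e - t else t)" for t
  have iff: "g e t = 0 \<longleftrightarrow> k * d t = pi/2" if t: "0 < t" "t < len H e" for t
  proof -
    have "g e t = g e (t0 e) * cos (k * (t - t0 e))" using grep[OF e, of t] t by simp
    moreover have "cos (k * (t - t0 e)) = cos (k * d t)"
    proof (cases "lb e")
      case True
      have "k * (t - len H e) = - (k * (len H e - t))" by (simp add: algebra_simps)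
      then show ?thesis using True by (simp add: d_def t0_def)
    qed (simp add: d_def t0_def)
    moreover have "0 \<le> k * d t" "k * d t \<le> pi"
    proof -
      have "d t \<le> len H e" "0 \<le> d t" using t by (auto simp: d_def)
      then show "0 \<le> k * d t" "k * d t \<le> pi" using kpos kl
        by (auto intro: order_trans[OF mult_left_mono[of "d t" "len H e" k]])
    qed
    moreover have "cos (k * d t) = 0 \<longleftrightarrow> k * d t = pi/2"
    proof
      assume "cos (k * d t) = 0"
      then have "cos (k * d t) = cos (pi/2)" by simp
      then show "k * d t = pi/2" using cos_inj_pi[of "k * d t" "pi/2"] \<open>0 \<le> k * d t\<close> \<open>k * d t \<le> pi\<close> by simp
    next
      assume h: "k * d t = pi/2" show "cos (k * d t) = 0" unfolding h by (rule cos_pi_half)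
    qed
    ultimately show ?thesis using A_nz[OF e] by simp
  qed
  show ?thesis
  proof (intro set_eqI iffI)
    fix t assume "t \<in> {t. 0 < t \<and> t < len H e \<and> g e t = 0}"
    then have t: "0 < t" "t < len H e" "k * d t = pi/2" using iff by auto
    then have "d t = pi / (2 * k)" using kpos by (simp add: field_simps)
    moreover have "pi/2 < k * len H e"
    proof -
      have "d t < len H e" using t by (auto simp: d_def)
      then have "k * d t < k * len H e" using kpos by simp
      then show ?thesis using t by simp
    qed
    ultimately show "t \<in> (if pi/2 < k * len H e then {if lb e then len H e - pi / (2 * k) else pi / (2 * k)} else {})"
      by (auto simp: d_def split: if_splits)
  next
    fix t assume "t \<in> (if pi/2 < k * len H e then {if lb e then len H e - pi / (2 * k) else pi / (2 * k)} else {})"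
    then have big: "pi/2 < k * len H e" and tt: "t = (if lb e then len H e - pi / (2 * k) else pi / (2 * k))"
      by (auto split: if_splits)
    have p: "pi / (2 * k) < len H e" using big kpos by (simp add: field_simps)
    have p0: "0 < pi / (2 * k)" using kpos by simp
    have t: "0 < t" "t < len H e" using tt p p0 by auto
    have "d t = pi / (2 * k)" using tt by (auto simp: d_def)
    then have "k * d t = pi/2" using kpos by simp
    then show "t \<in> {t. 0 < t \<and> t < len H e \<and> g e t = 0}" using iff[OF t] t by simp
  qed
qed

lemma nodal_eq: "nodal_count H g = card {e\<in>edges H. pi/2 < k * len H e}"
proof -
  have "{(e, x). e \<in> edges H \<and> 0 < x \<and> x < len H e \<and> g e x = 0} =
        Sigma (edges H) (\<lambda>e. {t. 0 < t \<and> t < len H e \<and> g e t = 0})" by auto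
  then have "nodal_count H g = (\<Sum>e\<in>edges H. card {t. 0 < t \<and> t < len H e \<and> g e t = 0})"
    unfolding nodal_count_def using finE zeros_edge by (simp add: card_SigmaI)
  also have "\<dots> = (\<Sum>e\<in>edges H. if pi/2 < k * len H e then 1 else 0)"
    using zeros_edge by (intro sum.cong) auto
  also have "\<dots> = card {e\<in>edges H. pi/2 < k * len H e}"
    using finE by (simp add: sum.If_cases Int_def)
  finally show ?thesis .
qed

theorem star_main: "mult H (k\<^sup>2) = 1 \<and> Ncount H k = nodal_count H g"
  using mult_k Ncount_eq nodal_eq by simp

end

lemma ode_rep_gen:
  fixes h h' :: "real \<Rightarrow> real"
  assumes hd: "\<And>t. t \<in> {0..l} \<Longrightarrow> (h has_real_derivative h' t) (at t within {0..l})"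
    and hd2: "\<And>t. t \<in> {0..l} \<Longrightarrow> (h' has_real_derivative (- (\<mu>\<^sup>2) * h t)) (at t within {0..l})"
    and mu: "\<mu> > 0" and l: "0 \<le> l"
  shows "\<forall>t\<in>{0..l}. h t = h 0 * cos (\<mu> * t) + h' 0 / \<mu> * sin (\<mu> * t) \<and>
                     h' t = - h 0 * \<mu> * sin (\<mu> * t) + h' 0 * cos (\<mu> * t)"
proof -
  define a where "a = h 0"
  define b where "b = h' 0 / \<mu>"
  have bm: "b * \<mu> = h' 0" using mu by (simp add: b_def)
  define w where "w t = h t - (a * cos (\<mu> * t) + b * sin (\<mu> * t))" for t
  define w' where "w' t = h' t - (- a * \<mu> * sin (\<mu> * t) + b * \<mu> * cos (\<mu> * t))" for t
  have d1: "(w has_real_derivative w' t) (at t within {0..l})" if t: "t \<in> {0..l}" for t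
    unfolding w_def[abs_def] w'_def by (auto intro!: derivative_eq_intros hd[OF t])
  have d2: "(w' has_real_derivative (- (\<mu>\<^sup>2) * w t)) (at t within {0..l})" if t: "t \<in> {0..l}" for t
  proof -
    have "(w' has_real_derivative (- (\<mu>\<^sup>2) * h t - (- a * \<mu> * (cos (\<mu> * t) * \<mu>) + b * \<mu> * (- sin (\<mu> * t) * \<mu>)))) (at t within {0..l})"
      unfolding w'_def[abs_def] by (auto intro!: derivative_eq_intros hd2[OF t])
    moreover have "- (\<mu>\<^sup>2) * h t - (- a * \<mu> * (cos (\<mu> * t) * \<mu>) + b * \<mu> * (- sin (\<mu> * t) * \<mu>)) = - (\<mu>\<^sup>2) * w t"
      by (simp add: w_def power2_eq_square algebra_simps)
    ultimately show ?thesis by simp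
  qed
  have l0: "0 \<in> {0..l}" using l by simp
  have "\<forall>t\<in>{0..l}. w t = 0 \<and> w' t = 0"
    by (rule ode_zero[OF d1 d2 _ l0]) (simp_all add: w_def w'_def a_def bm)
  then have "\<forall>t\<in>{0..l}. h t = a * cos (\<mu> * t) + b * sin (\<mu> * t) \<and> h' t = - a * \<mu> * sin (\<mu> * t) + b * \<mu> * cos (\<mu> * t)"
    by (auto simp: w_def w'_def)
  then show ?thesis unfolding bm unfolding a_def b_def by blast
qed

locale gctx =
  fixes G :: "('v,'e) mgraph" and f :: "'e \<Rightarrow> real \<Rightarrow> real" and k :: real
  assumes std: "standard_graph G" and gen: "generic_eigenfunction G (k\<^sup>2) f"
    and kbig: "k > pi / Lmin G"
begin

lemma wfG: "wf_graph G" using std by (simp add: standard_graph_def)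
lemma finEG: "finite (edges G)" using wfG by (simp add: wf_graph_def)
lemma finVG: "finite (verts G)" using wfG by (simp add: wf_graph_def)
lemma lenG: "e \<in> edges G \<Longrightarrow> len G e > 0" using wfG by (simp add: wf_graph_def)
lemma solG: "solves G (k\<^sup>2) f" using gen by (simp add: generic_eigenfunction_def is_eigenfunction_def)
lemma neG: "edges G \<noteq> {}" using gen by (auto simp: generic_eigenfunction_def is_eigenfunction_def)
lemma endpt_G_in: "e \<in> edges G \<Longrightarrow> endpt G e b \<in> verts G"
  using wfG by (auto simp: wf_graph_def endpt_def)

lemma endvalG_nz: "e \<in> edges G \<Longrightarrow> endval G f e b \<noteq> 0"
  using gen endpt_G_in[of e b] by (auto simp: generic_eigenfunction_def ends_at_def)

lemma Lmin_le: "e \<in> edges G \<Longrightarrow> Lmin G \<le> len G e"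
  using finEG by (simp add: Lmin_def)

lemma Lmin_pos: "Lmin G > 0"
proof -
  have "Lmin G \<in> len G ` edges G" unfolding Lmin_def using finEG neG by (intro Min_in) auto
  then show ?thesis using lenG by auto
qed

lemma kpos: "k > 0" using kbig Lmin_pos by (smt (verit) divide_pos_pos pi_gt_zero)

lemma klong: "e \<in> edges G \<Longrightarrow> pi < k * len G e"
proof -
  assume e: "e \<in> edges G"
  have "pi / len G e \<le> pi / Lmin G" using Lmin_le[OF e] Lmin_pos by (intro divide_left_mono) auto
  then have "pi / len G e < k" using kbig by simp
  then show ?thesis using lenG[OF e] by (simp add: field_simps)
qed

lemma dG1: "e \<in> edges G \<Longrightarrow> t \<in> {0..len G e} \<Longrightarrow> (f e has_real_derivative Dv G f e t) (at t within {0..len G e})"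
  using solG by (auto simp: solves_def has_real_derivative_iff_has_vector_derivative)
lemma dG2: "e \<in> edges G \<Longrightarrow> t \<in> {0..len G e} \<Longrightarrow> (Dv G f e has_real_derivative (- (k\<^sup>2) * f e t)) (at t within {0..len G e})"
  using solG by (auto simp: solves_def has_real_derivative_iff_has_vector_derivative)

lemma f0_nz: "e \<in> edges G \<Longrightarrow> f e 0 \<noteq> 0"
  using endvalG_nz[of e False] by (simp add: endval_def)

lemma neu_f_nz:
  assumes e: "e \<in> edges G" and x: "x \<in> {0..len G e}" and d: "Dv G f e x = 0"
  shows "f e x \<noteq> 0"
proof
  assume "f e x = 0"
  then have "\<forall>t\<in>{0..len G e}. f e t = 0 \<and> Dv G f e t = 0"
    using ode_zero[OF dG1[OF e] dG2[OF e] _ x _ d] by simp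
  then show False using f0_nz[OF e] lenG[OF e] by auto
qed

definition Dx where "Dx e t = - f e 0 * k * sin (k * t) + Dv G f e 0 * cos (k * t)"

lemma Dv_rep:
  assumes e: "e \<in> edges G" and t: "t \<in> {0..len G e}"
  shows "Dv G f e t = Dx e t"
proof -
  have "\<forall>t\<in>{0..len G e}. f e t = f e 0 * cos (k * t) + Dv G f e 0 / k * sin (k * t) \<and>
                     Dv G f e t = - f e 0 * k * sin (k * t) + Dv G f e 0 * cos (k * t)"
    by (rule ode_rep_gen[OF dG1[OF e] dG2[OF e] kpos less_imp_le[OF lenG[OF e]]])
  then show ?thesis using t unfolding Dx_def by blast
qed

lemma Dx_anti: "Dx e (t + pi / k) = - Dx e t"
proof -
  have "k * (t + pi / k) = k * t + pi" using kpos by (simp add: field_simps)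
  then show ?thesis by (simp add: Dx_def)
qed

lemma neu_exists:
  assumes e: "e \<in> edges G"
  shows "\<exists>x. 0 < x \<and> x < len G e \<and> Dv G f e x = 0"
proof -
  define t1 where "t1 = (len G e - pi / k) / 2"
  define t2 where "t2 = t1 + pi / k"
  have pk: "pi / k < len G e" using klong[OF e] kpos by (simp add: field_simps)
  have pk0: "0 < pi / k" using kpos by simp
  have "0 < len G e - pi / k" using pk by simp
  then have t10: "0 < t1" unfolding t1_def by simp
  have t12: "t1 < t2" using pk0 unfolding t2_def by linarith
  have t2l: "t2 < len G e"
  proof -
    have aux: "\<And>p L::real. p < L \<Longrightarrow> (L - p) / 2 + p < L" by (simp add: field_simps)
    show ?thesis unfolding t1_def t2_def by (rule aux[OF pk])
  qed
  note t = t10 t12 t2l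
  have cont: "continuous_on {t1..t2} (Dx e)" unfolding Dx_def by (intro continuous_intros)
  have anti: "Dx e t2 = - Dx e t1" unfolding t2_def by (rule Dx_anti)
  obtain x where x: "t1 \<le> x" "x \<le> t2" "Dx e x = 0"
  proof (cases "Dx e t1 \<le> 0")
    case True
    then show ?thesis using IVT'[of "Dx e" t1 0 t2] anti cont t that by auto
  next
    case False
    then show ?thesis using IVT2'[of "Dx e" t2 0 t1] anti cont t that by auto
  qed
  then show ?thesis using t Dv_rep[OF e, of x] by (intro exI[of _ x]) auto
qed

lemma neu_sep:
  assumes e: "e \<in> edges G" and x: "x \<in> {0..len G e}" and y: "y \<in> {0..len G e}"
    and dx: "Dv G f e x = 0" and dy: "Dv G f e y = 0" and xy: "x < y"
  shows "pi / k \<le> y - x"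
proof (rule ccontr)
  assume "\<not> pi / k \<le> y - x"
  then have "k * (y - x) < pi" using kpos by (simp add: field_simps)
  moreover have "0 < k * (y - x)" using kpos xy by simp
  ultimately have s: "sin (k * (y - x)) \<noteq> 0" by (metis sin_gt_zero less_irrefl)
  define \<alpha> where "\<alpha> = f e 0 * k"
  define \<beta> where "\<beta> = Dv G f e 0"
  have e1: "\<beta> * cos (k * x) = \<alpha> * sin (k * x)" using Dv_rep[OF e x] dx by (simp add: Dx_def \<alpha>_def \<beta>_def)
  have e2: "\<beta> * cos (k * y) = \<alpha> * sin (k * y)" using Dv_rep[OF e y] dy by (simp add: Dx_def \<alpha>_def \<beta>_def)
  have "\<alpha> * sin (k * (y - x)) = (\<alpha> * sin (k * y)) * cos (k * x) - cos (k * y) * (\<alpha> * sin (k * x))"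
    by (simp add: right_diff_distrib sin_diff algebra_simps)
  also have "\<dots> = 0" by (simp add: e1[symmetric] e2[symmetric] algebra_simps)
  finally have "\<alpha> = 0" using s by simp
  then show False using f0_nz[OF e] kpos by (simp add: \<alpha>_def)
qed

definition N where "N e = {x. 0 < x \<and> x < len G e \<and> Dv G f e x = 0}"

lemma N_fin:
  assumes e: "e \<in> edges G"
  shows "finite (N e)"
proof -
  define \<phi> where "\<phi> x = nat \<lfloor>x * k / pi\<rfloor>" for x
  have "inj_on \<phi> (N e)"
  proof (rule inj_onI, rule ccontr)
    fix x y assume x: "x \<in> N e" and y: "y \<in> N e" and eq: "\<phi> x = \<phi> y" and ne: "x \<noteq> y"
    have "0 \<le> \<lfloor>x * k / pi\<rfloor>" "0 \<le> \<lfloor>y * k / pi\<rfloor>" using x y kpos by (auto simp: N_def)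
    then have fl: "\<lfloor>x * k / pi\<rfloor> = \<lfloor>y * k / pi\<rfloor>"
      using eq unfolding \<phi>_def by (metis eq_nat_nat_iff)
    have close: "\<bar>x * k / pi - y * k / pi\<bar> < 1"
      using fl by linarith
    have "\<bar>x - y\<bar> < pi / k"
    proof -
      have "x * k / pi - y * k / pi = (x - y) * (k / pi)" by (simp add: algebra_simps diff_divide_distrib)
      then have "\<bar>x * k / pi - y * k / pi\<bar> = \<bar>x - y\<bar> * (k / pi)" using kpos by (simp add: abs_mult)
      then have "\<bar>x - y\<bar> * (k / pi) < 1" using close by simp
      then have "\<bar>x - y\<bar> * k < pi" using pi_gt_zero by (simp add: field_simps)
      then show ?thesis using kpos by (simp add: field_simps)
    qed
    moreover have "pi / k \<le> \<bar>x - y\<bar>"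
    proof (cases "x < y")
      case True then show ?thesis using neu_sep[OF e, of x y] x y by (auto simp: N_def)
    next
      case False then have "y < x" using ne by simp
      then show ?thesis using neu_sep[OF e, of y x] x y by (auto simp: N_def)
    qed
    ultimately show False by simp
  qed
  moreover have "\<phi> ` N e \<subseteq> {..nat \<lfloor>len G e * k / pi\<rfloor>}"
  proof
    fix n assume "n \<in> \<phi> ` N e"
    then obtain x where x: "x \<in> N e" "n = \<phi> x" by auto
    then have "x * k / pi \<le> len G e * k / pi" using kpos by (auto simp: N_def divide_right_mono)
    then show "n \<in> {..nat \<lfloor>len G e * k / pi\<rfloor>}" using x by (auto simp: \<phi>_def intro: nat_mono floor_mono)
  qed
  ultimately show ?thesis by (metis finite_atMost finite_imageD finite_subset)
qed

lemma N_ne: "e \<in> edges G \<Longrightarrow> N e \<noteq> {}"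
  using neu_exists by (auto simp: N_def)

lemma cutpts_eq: "cutpts G f e = {0, len G e} \<union> (if e \<in> edges G then N e else {})"
  by (auto simp: cutpts_def neumann_pts_def N_def)

lemma cut_fin: "e \<in> edges G \<Longrightarrow> finite (cutpts G f e)"
  using N_fin by (simp add: cutpts_eq)

end

lemma shift_deriv:
  fixes F :: "real \<Rightarrow> real"
  assumes d: "(F has_vector_derivative D) (at (a + t) within {0..L})"
    and ab: "0 \<le> a" "a < b" "b \<le> L" and t: "t \<in> {0..b - a}"
  shows "((\<lambda>s. F (a + s)) has_vector_derivative D) (at t within {0..b - a})"
proof -
  have d1: "((\<lambda>s. a + s) has_vector_derivative 1) (at t within {0..b - a})"
    by (auto intro!: derivative_eq_intros)
  have "(\<lambda>s. a + s) ` {0..b - a} \<subseteq> {0..L}" using ab by auto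
  then have d2: "(F has_vector_derivative D) (at ((\<lambda>s. a + s) t) within (\<lambda>s. a + s) ` {0..b - a})"
    using has_vector_derivative_within_subset[OF d] by simp
  show ?thesis using vector_diff_chain_within[OF d1 d2] by (simp add: o_def)
qed

context gctx
begin

lemma piece_iff: "(e, a, b) \<in> pieces G f \<longleftrightarrow> e \<in> edges G \<and> a \<in> cutpts G f e \<and> b \<in> cutpts G f e \<and> a < b \<and>
   (\<forall>y\<in>cutpts G f e. \<not> (a < y \<and> y < b))"
  by (simp add: pieces_def)

lemma cut_bounds: "e \<in> edges G \<Longrightarrow> y \<in> cutpts G f e \<Longrightarrow> 0 \<le> y \<and> y \<le> len G e"
  using lenG[of e] by (auto simp: cutpts_eq N_def)

lemma piece_bounds: "(e, a, b) \<in> pieces G f \<Longrightarrow> e \<in> edges G \<and> 0 \<le> a \<and> a < b \<and> b \<le> len G e"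
  using cut_bounds by (auto simp: piece_iff)

lemma piece_interior:
  assumes p: "(e, a, b) \<in> pieces G f" and x: "a < x" "x < b"
  shows "Dv G f e x \<noteq> 0"
proof
  assume d: "Dv G f e x = 0"
  have "0 < x" "x < len G e" using piece_bounds[OF p] x by auto
  then have "x \<in> cutpts G f e" using d piece_bounds[OF p] by (auto simp: cutpts_eq N_def)
  then show False using p x by (auto simp: piece_iff)
qed

lemma piece_a:
  assumes p: "(e, a, b) \<in> pieces G f" and a: "a \<noteq> 0"
  shows "a \<in> N e"
proof -
  have e: "e \<in> edges G" and ac: "a \<in> cutpts G f e" using p by (simp_all add: piece_iff)
  have "a < b" "b \<le> len G e" using piece_bounds[OF p] by auto
  moreover have "a \<in> {0, len G e} \<union> N e" using ac e by (simp add: cutpts_eq)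
  ultimately show ?thesis using a by auto
qed

lemma piece_b:
  assumes p: "(e, a, b) \<in> pieces G f" and b: "b \<noteq> len G e"
  shows "b \<in> N e"
proof -
  have e: "e \<in> edges G" and bc: "b \<in> cutpts G f e" using p by (simp_all add: piece_iff)
  have "0 \<le> a" "a < b" using piece_bounds[OF p] by auto
  moreover have "b \<in> {0, len G e} \<union> N e" using bc e by (simp add: cutpts_eq)
  ultimately show ?thesis using b by auto
qed

lemma piece_uniq_b:
  assumes p1: "(e, a, b) \<in> pieces G f" and p2: "(e, a, b') \<in> pieces G f"
  shows "b = b'"
proof (rule ccontr)
  assume ne: "b \<noteq> b'"
  have c1: "b \<in> cutpts G f e" "a < b" "\<forall>y\<in>cutpts G f e. \<not> (a < y \<and> y < b)" using p1 by (simp_all add: piece_iff)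
  have c2: "b' \<in> cutpts G f e" "a < b'" "\<forall>y\<in>cutpts G f e. \<not> (a < y \<and> y < b')" using p2 by (simp_all add: piece_iff)
  show False
  proof (cases "b < b'")
    case True then show False using c1 c2 by blast
  next
    case False then have "b' < b" using ne by simp
    then show False using c1 c2 by blast
  qed
qed

lemma piece_uniq_a:
  assumes p1: "(e, a, b) \<in> pieces G f" and p2: "(e, a', b) \<in> pieces G f"
  shows "a = a'"
proof (rule ccontr)
  assume ne: "a \<noteq> a'"
  have c1: "a \<in> cutpts G f e" "a < b" "\<forall>y\<in>cutpts G f e. \<not> (a < y \<and> y < b)" using p1 by (simp_all add: piece_iff)
  have c2: "a' \<in> cutpts G f e" "a' < b" "\<forall>y\<in>cutpts G f e. \<not> (a' < y \<and> y < b)" using p2 by (simp_all add: piece_iff)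
  show False
  proof (cases "a < a'")
    case True then show False using c1 c2 by blast
  next
    case False then have "a' < a" using ne by simp
    then show False using c1 c2 by blast
  qed
qed

lemma piece_not_full: "(e, a, b) \<in> pieces G f \<Longrightarrow> \<not> (a = 0 \<and> b = len G e)"
proof
  assume p: "(e, a, b) \<in> pieces G f" and ab: "a = 0 \<and> b = len G e"
  have e: "e \<in> edges G" using piece_bounds[OF p] by simp
  obtain x where "x \<in> N e" using N_ne[OF e] by auto
  then have "x \<in> cutpts G f e" "0 < x" "x < len G e" using e by (auto simp: cutpts_eq N_def)
  then show False using p ab by (auto simp: piece_iff)
qed

definition firstp where "firstp e = Min {y\<in>cutpts G f e. 0 < y}"
definition lastp where "lastp e = Max {y\<in>cutpts G f e. y < len G e}"

lemma first_piece: "e \<in> edges G \<Longrightarrow> (e, 0, firstp e) \<in> pieces G f"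
proof -
  assume e: "e \<in> edges G"
  let ?S = "{y\<in>cutpts G f e. 0 < y}"
  have fin: "finite ?S" using cut_fin[OF e] by simp
  have ne: "len G e \<in> ?S" using lenG[OF e] by (auto simp: cutpts_def)
  have m: "firstp e \<in> ?S" unfolding firstp_def using Min_in[OF fin] ne by blast
  have le: "\<And>y. y \<in> ?S \<Longrightarrow> firstp e \<le> y" unfolding firstp_def using fin by simp
  show ?thesis unfolding piece_iff using e m le by (force simp: cutpts_def)
qed

lemma last_piece: "e \<in> edges G \<Longrightarrow> (e, lastp e, len G e) \<in> pieces G f"
proof -
  assume e: "e \<in> edges G"
  let ?S = "{y\<in>cutpts G f e. y < len G e}"
  have fin: "finite ?S" using cut_fin[OF e] by simp
  have ne: "0 \<in> ?S" using lenG[OF e] by (auto simp: cutpts_def)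
  have m: "lastp e \<in> ?S" unfolding lastp_def using Max_in[OF fin] ne by blast
  have le: "\<And>y. y \<in> ?S \<Longrightarrow> y \<le> lastp e" unfolding lastp_def using fin by simp
  show ?thesis unfolding piece_iff using e m le by (force simp: cutpts_def)
qed

definition Hc where "Hc = cut_graph G f"

lemma H_edges: "edges Hc = pieces G f" by (simp add: Hc_def cut_graph_def)
lemma H_len: "len Hc (e, a, b) = b - a" by (simp add: Hc_def cut_graph_def)

definition pos where "pos p bb = (case p of (e, a, b) \<Rightarrow> if bb then b else a)"

lemma endpt_H: "endpt Hc (e, a, b) bb =
   (if bb then (if b = len G e then Inl (snd (ends G e)) else Inr (e, b, False))
          else (if a = 0 then Inl (fst (ends G e)) else Inr (e, a, True)))"
  by (simp add: Hc_def endpt_def cut_graph_def cut_ends_def)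

lemma Inl_end:
  assumes p: "(e, a, b) \<in> pieces G f" and v: "endpt Hc (e, a, b) bb = Inl v"
  shows "pos (e, a, b) bb = (if bb then len G e else 0) \<and> v = endpt G e bb"
  using v by (auto simp: endpt_H pos_def endpt_def[of G] split: if_splits)

lemma Inr_end:
  assumes p: "(e, a, b) \<in> pieces G f" and v: "endpt Hc (e, a, b) bb = Inr z"
  shows "z = (e, pos (e, a, b) bb, \<not> bb) \<and> pos (e, a, b) bb \<in> N e"
  using v piece_a[OF p] piece_b[OF p] by (auto simp: endpt_H pos_def split: if_splits)

lemma Inr_uniq:
  assumes p: "p \<in> pieces G f" and p': "p' \<in> pieces G f"
    and z: "endpt Hc p bb = Inr z" and z': "endpt Hc p' bb' = Inr z"
  shows "p = p' \<and> bb = bb'"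
proof -
  obtain e a b where pe: "p = (e, a, b)" by (cases p) auto
  obtain e' a' b' where pe': "p' = (e', a', b')" by (cases p') auto
  have 1: "z = (e, pos p bb, \<not> bb)" using Inr_end[OF p[unfolded pe] z[unfolded pe]] pe by simp
  have 2: "z = (e', pos p' bb', \<not> bb')" using Inr_end[OF p'[unfolded pe'] z'[unfolded pe']] pe' by simp
  have ee: "e = e'" and bb: "bb = bb'" and ps: "pos p bb = pos p' bb'" using 1 2 by auto
  show ?thesis
  proof (cases bb)
    case True
    then have "b = b'" using ps bb by (simp add: pe pe' pos_def)
    then have "a = a'" using piece_uniq_a p p' ee by (simp add: pe pe')
    then show ?thesis using \<open>b = b'\<close> ee bb pe pe' by simp
  next
    case False
    then have "a = a'" using ps bb by (simp add: pe pe' pos_def)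
    then have "b = b'" using piece_uniq_b p p' ee by (simp add: pe pe')
    then show ?thesis using \<open>a = a'\<close> ee bb pe pe' by simp
  qed
qed

lemma one_Inl:
  assumes p: "p \<in> pieces G f" and "endpt Hc p False = Inl v" and "endpt Hc p True = Inl w"
  shows False
proof -
  obtain e a b where pe: "p = (e, a, b)" by (cases p) auto
  show False using assms piece_not_full[of e a b] by (auto simp: pe endpt_H split: if_splits)
qed

lemma Inl_bool:
  assumes p: "p \<in> pieces G f" and "endpt Hc p bb = Inl v" and "endpt Hc p bb' = Inl w"
  shows "bb = bb' \<and> v = w"
  using assms one_Inl[OF p] by (cases bb; cases bb') auto

definition piece_at where "piece_at e bb = (if bb then (e, lastp e, len G e) else (e, 0, firstp e))"

lemma piece_at_in: "e \<in> edges G \<Longrightarrow> piece_at e bb \<in> pieces G f"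
  using first_piece last_piece by (simp add: piece_at_def)

lemma piece_at_end: "e \<in> edges G \<Longrightarrow> endpt Hc (piece_at e bb) bb = Inl (endpt G e bb)"
  by (auto simp: piece_at_def endpt_H endpt_def[of G])

lemma Inl_piece_at:
  assumes p: "p \<in> pieces G f" and v: "endpt Hc p bb = Inl v"
  shows "p = piece_at (fst p) bb \<and> v = endpt G (fst p) bb \<and> fst p \<in> edges G"
proof -
  obtain e a b where pe: "p = (e, a, b)" by (cases p) auto
  have e: "e \<in> edges G" using piece_bounds p pe by blast
  have *: "pos (e, a, b) bb = (if bb then len G e else 0) \<and> v = endpt G e bb"
    using Inl_end[OF p[unfolded pe] v[unfolded pe]] .
  show ?thesis
  proof (cases bb)
    case True
    then have "b = len G e" using * by (simp add: pos_def)
    then have "a = lastp e" using piece_uniq_a[of e a b "lastp e"] p pe last_piece[OF e] by simp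
    then show ?thesis using True * pe e \<open>b = len G e\<close> by (simp add: piece_at_def)
  next
    case False
    then have "a = 0" using * by (simp add: pos_def)
    then have "b = firstp e" using piece_uniq_b[of e a b "firstp e"] p pe first_piece[OF e] by simp
    then show ?thesis using False * pe e \<open>a = 0\<close> by (simp add: piece_at_def)
  qed
qed

definition gg where "gg = restrict_nd f"

lemma gg_eq: "gg (e, a, b) t = f e (a + t)" by (simp add: gg_def restrict_nd_def)

lemma Dv_H:
  assumes p: "(e, a, b) \<in> pieces G f" and t: "t \<in> {0..b - a}"
  shows "Dv Hc gg (e, a, b) t = Dv G f e (a + t)"
    and "(gg (e, a, b) has_vector_derivative Dv G f e (a + t)) (at t within {0..b - a})"
    and "((\<lambda>s. Dv G f e (a + s)) has_vector_derivative (- (k\<^sup>2) * gg (e, a, b) t)) (at t within {0..b - a})"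
proof -
  note pb = piece_bounds[OF p]
  have at: "a + t \<in> {0..len G e}" using pb t by auto
  have "(f e has_vector_derivative Dv G f e (a + t)) (at (a + t) within {0..len G e})"
    using solG pb at by (auto simp: solves_def)
  then have d: "((\<lambda>s. f e (a + s)) has_vector_derivative Dv G f e (a + t)) (at t within {0..b - a})"
    using shift_deriv pb t by blast
  have gfun: "gg (e, a, b) = (\<lambda>s. f e (a + s))" by (rule ext) (simp add: gg_eq)
  show "(gg (e, a, b) has_vector_derivative Dv G f e (a + t)) (at t within {0..b - a})"
    using d gfun by simp
  show "Dv Hc gg (e, a, b) t = Dv G f e (a + t)"
    unfolding Dv_def[of Hc] H_len gfun using pb t d by (intro vector_derivative_within_closed_interval) auto
  have "(Dv G f e has_vector_derivative (- (k\<^sup>2) * f e (a + t))) (at (a + t) within {0..len G e})"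
    using solG pb at by (auto simp: solves_def)
  then show "((\<lambda>s. Dv G f e (a + s)) has_vector_derivative (- (k\<^sup>2) * gg (e, a, b) t)) (at t within {0..b - a})"
    using shift_deriv pb t by (simp add: gg_eq)
qed

lemma endval_H: "p \<in> pieces G f \<Longrightarrow> endval Hc gg p bb = f (fst p) (pos p bb)"
  by (cases p) (auto simp: endval_def gg_eq pos_def H_len)

lemma outder_H:
  assumes p: "p \<in> pieces G f"
  shows "outder Hc gg p bb = (if bb then - Dv G f (fst p) (pos p bb) else Dv G f (fst p) (pos p bb))"
proof -
  obtain e a b where pe: "p = (e, a, b)" by (cases p) auto
  note pb = piece_bounds[OF p[unfolded pe]]
  have "Dv Hc gg (e, a, b) (b - a) = Dv G f e b" using Dv_H(1)[OF p[unfolded pe], of "b - a"] pb by simp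
  moreover have "Dv Hc gg (e, a, b) 0 = Dv G f e a" using Dv_H(1)[OF p[unfolded pe], of 0] pb by simp
  ultimately show ?thesis by (auto simp: outder_def pe pos_def H_len)
qed

end

locale gcomp = gctx G f k for G :: "('v,'e) mgraph" and f k +
  fixes p0 assumes p0: "p0 \<in> pieces G f"
begin

definition Om where "Om = component_graph Hc p0"
definition CC where "CC = {q \<in> edges Hc. (p0, q) \<in> (edge_adj Hc)\<^sup>*}"

lemma Om_edges: "edges Om = CC" by (simp add: Om_def CC_def component_graph_def Let_def)
lemma Om_len: "len Om = len Hc" by (simp add: Om_def component_graph_def Let_def)
lemma Om_ends: "ends Om = ends Hc" by (simp add: Om_def component_graph_def Let_def)
lemma Om_verts: "verts Om = {endpt Hc q b | q b. q \<in> CC}" by (simp add: Om_def CC_def component_graph_def Let_def)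

lemma Om_endpt: "endpt Om = endpt Hc" by (simp add: fun_eq_iff endpt_def Om_ends)
lemma Om_ends_at: "ends_at Om v = {(q, b). q \<in> CC \<and> endpt Hc q b = v}"
  by (simp add: ends_at_def Om_endpt Om_edges)
lemma Om_Dv: "Dv Om = Dv Hc" by (simp add: fun_eq_iff Dv_def Om_len)
lemma Om_endval: "endval Om = endval Hc" by (simp add: fun_eq_iff endval_def Om_len)
lemma Om_outder: "outder Om = outder Hc" by (simp add: fun_eq_iff outder_def Om_Dv Om_len)

lemma CC_sub: "CC \<subseteq> pieces G f" by (auto simp: CC_def H_edges)
lemma p0_CC: "p0 \<in> CC" using p0 by (simp add: CC_def H_edges)

lemma CC_closed:
  assumes q: "q \<in> CC" and q': "q' \<in> pieces G f" and eq: "endpt Hc q b = endpt Hc q' b'"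
  shows "q' \<in> CC"
proof -
  have "(q, q') \<in> edge_adj Hc" using q q' eq CC_sub by (auto simp: edge_adj_def H_edges)
  then show ?thesis using q q' by (auto simp: CC_def H_edges intro: rtrancl_into_rtrancl)
qed

lemma pieces_fin: "finite (pieces G f)"
proof -
  have "pieces G f \<subseteq> Sigma (edges G) (\<lambda>e. cutpts G f e \<times> cutpts G f e)" by (auto simp: piece_iff)
  moreover have "finite (Sigma (edges G) (\<lambda>e. cutpts G f e \<times> cutpts G f e))"
    using finEG cut_fin by auto
  ultimately show ?thesis by (rule finite_subset)
qed

lemma vertsE: "w \<in> verts Om \<Longrightarrow> \<exists>q b. q \<in> CC \<and> endpt Hc q b = w" by (auto simp: Om_verts)

lemma Inr_ends_at:
  assumes w: "Inr z \<in> verts Om"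
  shows "\<exists>q b. q \<in> CC \<and> endpt Hc q b = Inr z \<and> ends_at Om (Inr z) = {(q, b)}"
proof -
  obtain q b where qb: "q \<in> CC" "endpt Hc q b = Inr z" using vertsE[OF w] by blast
  have "ends_at Om (Inr z) = {(q, b)}"
  proof (intro set_eqI iffI)
    fix p assume "p \<in> ends_at Om (Inr z)"
    then obtain q' b' where p: "p = (q', b')" "q' \<in> CC" "endpt Hc q' b' = Inr z" by (auto simp: Om_ends_at)
    then have "q' = q \<and> b' = b" using Inr_uniq[of q' q b' z b] qb CC_sub by auto
    then show "p \<in> {(q, b)}" using p by simp
  qed (use qb in \<open>auto simp: Om_ends_at\<close>)
  then show ?thesis using qb by blast
qed

lemma deg_Inr: "Inr z \<in> verts Om \<Longrightarrow> deg Om (Inr z) = 1"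
proof -
  assume "Inr z \<in> verts Om"
  then obtain q b where "ends_at Om (Inr z) = {(q, b)}" using Inr_ends_at by blast
  then show ?thesis by (simp add: deg_def)
qed

definition pmap where "pmap = (\<lambda>(e, bb). (piece_at e bb, bb))"

lemma Inl_ends_at:
  assumes w: "Inl v \<in> verts Om"
  shows "v \<in> verts G" "ends_at Om (Inl v) = pmap ` ends_at G v" "inj_on pmap (ends_at G v)"
proof -
  obtain q0 b0 where qb: "q0 \<in> CC" "endpt Hc q0 b0 = Inl v" using vertsE[OF w] by blast
  have i0: "q0 = piece_at (fst q0) b0 \<and> v = endpt G (fst q0) b0 \<and> fst q0 \<in> edges G"
    using Inl_piece_at[OF _ qb(2)] qb(1) CC_sub by auto
  then show "v \<in> verts G" using endpt_G_in by auto
  show "ends_at Om (Inl v) = pmap ` ends_at G v"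
  proof (intro set_eqI iffI)
    fix p assume "p \<in> ends_at Om (Inl v)"
    then obtain q b where p: "p = (q, b)" "q \<in> CC" "endpt Hc q b = Inl v" by (auto simp: Om_ends_at)
    have "q = piece_at (fst q) b \<and> v = endpt G (fst q) b \<and> fst q \<in> edges G"
      using Inl_piece_at[OF _ p(3)] p(2) CC_sub by auto
    then show "p \<in> pmap ` ends_at G v" using p
      by (auto simp: pmap_def ends_at_def intro!: image_eqI[of _ _ "(fst q, b)"])
  next
    fix p assume "p \<in> pmap ` ends_at G v"
    then obtain e b where eb: "p = (piece_at e b, b)" "e \<in> edges G" "endpt G e b = v"
      by (auto simp: pmap_def ends_at_def)
    have "endpt Hc (piece_at e b) b = Inl v" using piece_at_end[OF eb(2)] eb by simp
    then have "piece_at e b \<in> CC" using CC_closed[OF qb(1) piece_at_in[OF eb(2)]] qb(2) by metis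
    then show "p \<in> ends_at Om (Inl v)" using eb \<open>endpt Hc (piece_at e b) b = Inl v\<close> by (auto simp: Om_ends_at)
  qed
  show "inj_on pmap (ends_at G v)"
    by (auto simp: inj_on_def pmap_def piece_at_def split: if_splits)
qed

lemma deg_Inl: "Inl v \<in> verts Om \<Longrightarrow> deg Om (Inl v) = deg G v"
  using Inl_ends_at[of v] by (simp add: deg_def card_image)

lemma sum_Inl: "Inl v \<in> verts Om \<Longrightarrow> (\<Sum>p\<in>ends_at Om (Inl v). F p) = (\<Sum>p\<in>ends_at G v. F (pmap p))"
  using Inl_ends_at[of v] by (simp add: sum.reindex)

lemma pmap_vals:
  assumes "(e, bb) \<in> ends_at G v"
  shows "endval Hc gg (piece_at e bb) bb = endval G f e bb"
    "outder Hc gg (piece_at e bb) bb = outder G f e bb"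
proof -
  have e: "e \<in> edges G" using assms by (simp add: ends_at_def)
  have pp: "pos (piece_at e bb) bb = (if bb then len G e else 0)" by (simp add: piece_at_def pos_def)
  have f: "fst (piece_at e bb) = e" by (simp add: piece_at_def)
  show "endval Hc gg (piece_at e bb) bb = endval G f e bb"
    using endval_H[OF piece_at_in[OF e]] pp f by (simp add: endval_def[of G])
  show "outder Hc gg (piece_at e bb) bb = outder G f e bb"
    using outder_H[OF piece_at_in[OF e], of bb] pp f by (cases bb) (simp_all add: outder_def[of G])
qed

lemma Inr_vals:
  assumes q: "q \<in> pieces G f" and z: "endpt Hc q bb = Inr z"
  shows "outder Hc gg q bb = 0" "endval Hc gg q bb \<noteq> 0"
proof -
  obtain e a b where qe: "q = (e, a, b)" by (cases q) auto
  have e: "e \<in> edges G" using piece_bounds q qe by blast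
  have N: "pos q bb \<in> N e" using Inr_end[OF q[unfolded qe] z[unfolded qe]] qe by simp
  then have d: "Dv G f e (pos q bb) = 0" by (simp add: N_def)
  show "outder Hc gg q bb = 0" using outder_H[OF q, of bb] d qe by (cases bb) simp_all
  show "endval Hc gg q bb \<noteq> 0" using endval_H[OF q] qe neu_f_nz[OF e _ d] N by (simp add: N_def)
qed

lemma endval_nz:
  assumes q: "q \<in> pieces G f"
  shows "endval Hc gg q bb \<noteq> 0"
proof (cases "endpt Hc q bb")
  case (Inl v)
  have "q = piece_at (fst q) bb \<and> v = endpt G (fst q) bb \<and> fst q \<in> edges G"
    using Inl_piece_at[OF q Inl] .
  then have "(fst q, bb) \<in> ends_at G v" by (simp add: ends_at_def)
  then show ?thesis using pmap_vals(1) endvalG_nz \<open>q = piece_at (fst q) bb \<and> v = endpt G (fst q) bb \<and> fst q \<in> edges G\<close>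
    by metis
next
  case (Inr z)
  then show ?thesis using Inr_vals(2)[OF q] by simp
qed

lemma solves_Om: "solves Om (k\<^sup>2) gg"
  unfolding solves_def Om_Dv Om_endval Om_outder Om_edges Om_len
proof (intro conjI ballI)
  fix q x assume q: "q \<in> CC" and x: "x \<in> {0..len Hc q}"
  obtain e a b where qe: "q = (e, a, b)" by (cases q) auto
  have qp: "(e, a, b) \<in> pieces G f" using q qe CC_sub by auto
  have x': "x \<in> {0..b - a}" using x qe H_len by simp
  show "(gg q has_vector_derivative Dv Hc gg q x) (at x within {0..len Hc q})"
    using Dv_H(2)[OF qp x'] Dv_H(1)[OF qp x'] qe H_len by simp
  have "(Dv Hc gg (e, a, b) has_vector_derivative (- (k\<^sup>2) * gg (e, a, b) x)) (at x within {0..b - a})"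
    by (rule has_vector_derivative_transform[OF x' _ Dv_H(3)[OF qp x']]) (simp add: Dv_H(1)[OF qp])
  then show "(Dv Hc gg q has_vector_derivative (- (k\<^sup>2) * gg q x)) (at x within {0..len Hc q})"
    using qe H_len by simp
next
  fix w p p' assume w: "w \<in> verts Om" and p: "p \<in> ends_at Om w" and p': "p' \<in> ends_at Om w"
  show "endval Hc gg (fst p) (snd p) = endval Hc gg (fst p') (snd p')"
  proof (cases w)
    case (Inl v)
    then have wv: "Inl v \<in> verts Om" using w by simp
    obtain e b where eb: "(e, b) \<in> ends_at G v" "p = pmap (e, b)" using p Inl Inl_ends_at(2)[OF wv] by auto
    obtain e' b' where eb': "(e', b') \<in> ends_at G v" "p' = pmap (e', b')" using p' Inl Inl_ends_at(2)[OF wv] by auto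
    have "endval G f e b = endval G f e' b'"
      using solG Inl_ends_at(1)[OF wv] eb(1) eb'(1) unfolding solves_def by fastforce
    then show ?thesis using pmap_vals(1)[OF eb(1)] pmap_vals(1)[OF eb'(1)] eb eb' by (simp add: pmap_def)
  next
    case (Inr z)
    then show ?thesis using Inr_ends_at[of z] w p p' by auto
  qed
next
  fix w assume w: "w \<in> verts Om"
  show "(\<Sum>p\<in>ends_at Om w. outder Hc gg (fst p) (snd p)) = 0"
  proof (cases w)
    case (Inl v)
    then have wv: "Inl v \<in> verts Om" using w by simp
    have "(\<Sum>p\<in>ends_at Om w. outder Hc gg (fst p) (snd p)) = (\<Sum>p\<in>ends_at G v. outder Hc gg (fst (pmap p)) (snd (pmap p)))"
      using sum_Inl[OF wv] Inl by simp
    also have "\<dots> = (\<Sum>p\<in>ends_at G v. outder G f (fst p) (snd p))"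
      by (rule sum.cong[OF refl]) (auto simp: pmap_def pmap_vals(2))
    also have "\<dots> = 0" using solG Inl_ends_at(1)[OF wv] by (simp add: solves_def)
    finally show ?thesis .
  next
    case (Inr z)
    then obtain q b where qb: "q \<in> CC" "endpt Hc q b = Inr z" "ends_at Om w = {(q, b)}"
      using Inr_ends_at[of z] w by auto
    then show ?thesis using Inr_vals(1)[OF _ qb(2)] CC_sub by auto
  qed
qed

end

context gcomp
begin

lemma endpt_fst: "endpt Hc q False = fst (ends Hc q)" by (simp add: endpt_def)
lemma endpt_snd: "endpt Hc q True = snd (ends Hc q)" by (simp add: endpt_def)

lemma endpt_in_Om: "q \<in> CC \<Longrightarrow> endpt Hc q b \<in> verts Om"
  unfolding Om_verts by blast

lemma CC_path: "q \<in> CC \<Longrightarrow> (p0, q) \<in> (edge_adj Hc)\<^sup>*" by (simp add: CC_def)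

lemma adjE:
  assumes "(y, z) \<in> edge_adj Hc"
  obtains b b' where "y \<in> pieces G f" "z \<in> pieces G f" "endpt Hc y b = endpt Hc z b'"
  using assms by (auto simp: edge_adj_def H_edges)

lemma star_exists:
  "\<exists>c. c \<in> verts Om \<and>
     (\<forall>q\<in>CC. (endpt Hc q False = c \<and> endpt Hc q True \<noteq> c) \<or> (endpt Hc q True = c \<and> endpt Hc q False \<noteq> c)) \<and>
     (\<forall>w\<in>verts Om - {c}. \<exists>z. w = Inr z)"
proof (cases "\<exists>bb v. endpt Hc p0 bb = Inl v")
  case True
  then obtain bb0 v0 where v0: "endpt Hc p0 bb0 = Inl v0" by blast
  have A1: "\<exists>bb. endpt Hc q bb = Inl v0" if q: "q \<in> CC" for q
  proof -
    have "(p0, q) \<in> (edge_adj Hc)\<^sup>*" using CC_path[OF q] .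
    then show ?thesis
    proof (induction rule: rtrancl_induct)
      case base then show ?case using v0 by blast
    next
      case (step y z)
      from step.hyps(2) obtain b b' where yz: "y \<in> pieces G f" "z \<in> pieces G f" "endpt Hc y b = endpt Hc z b'"
        by (rule adjE)
      obtain bb where bb: "endpt Hc y bb = Inl v0" using step.IH by blast
      show ?case
      proof (cases "endpt Hc y b")
        case (Inl u)
        then have "b = bb \<and> u = v0" using Inl_bool[OF yz(1) Inl bb] by simp
        then show ?thesis using yz(3) Inl by auto
      next
        case (Inr w)
        then have "z = y" using Inr_uniq[OF yz(1) yz(2) Inr] yz(3) by simp
        then show ?thesis using bb by blast
      qed
    qed
  qed
  show ?thesis
  proof (intro exI[of _ "Inl v0"] conjI ballI)
    show "Inl v0 \<in> verts Om" using endpt_in_Om[OF p0_CC, of bb0] v0 by simp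
  next
    fix q assume q: "q \<in> CC"
    obtain bb where bb: "endpt Hc q bb = Inl v0" using A1[OF q] by blast
    have "endpt Hc q (\<not> bb) \<noteq> Inl v0"
    proof
      assume "endpt Hc q (\<not> bb) = Inl v0"
      then have "bb = (\<not> bb)" using Inl_bool[of q bb v0 "\<not> bb" v0] bb q CC_sub by auto
      then show False by simp
    qed
    then show "(endpt Hc q False = Inl v0 \<and> endpt Hc q True \<noteq> Inl v0) \<or> (endpt Hc q True = Inl v0 \<and> endpt Hc q False \<noteq> Inl v0)"
      using bb by (cases bb) auto
  next
    fix w assume w: "w \<in> verts Om - {Inl v0}"
    obtain q b where qb: "q \<in> CC" "endpt Hc q b = w" using vertsE w by blast
    show "\<exists>z. w = Inr z"
    proof (cases w)
      case (Inl u)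
      obtain bb where bb: "endpt Hc q bb = Inl v0" using A1[OF qb(1)] by blast
      have "u = v0" using Inl_bool[of q b u bb v0] qb Inl bb CC_sub by auto
      then show ?thesis using w Inl by simp
    next
      case (Inr z)
      then show ?thesis by blast
    qed
  qed
next
  case False
  have B1: "q = p0" if q: "q \<in> CC" for q
  proof -
    have "(p0, q) \<in> (edge_adj Hc)\<^sup>*" using CC_path[OF q] .
    then show ?thesis
    proof (induction rule: rtrancl_induct)
      case base then show ?case by simp
    next
      case (step y z)
      from step.hyps(2) obtain b b' where yz: "y \<in> pieces G f" "z \<in> pieces G f" "endpt Hc y b = endpt Hc z b'"
        by (rule adjE)
      have y: "y = p0" using step.IH .
      obtain w where w: "endpt Hc y b = Inr w" using False y by (cases "endpt Hc y b") auto
      then have "z = y" using Inr_uniq[OF yz(1) yz(2) w] yz(3) by simp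
      then show ?case using y by simp
    qed
  qed
  show ?thesis
  proof (intro exI[of _ "endpt Hc p0 False"] conjI ballI)
    show "endpt Hc p0 False \<in> verts Om" using endpt_in_Om[OF p0_CC] .
  next
    fix q assume q: "q \<in> CC"
    then have qp: "q = p0" by (rule B1)
    obtain w where w: "endpt Hc p0 True = Inr w" using False by (cases "endpt Hc p0 True") auto
    have "endpt Hc p0 True \<noteq> endpt Hc p0 False"
    proof
      assume "endpt Hc p0 True = endpt Hc p0 False"
      then have "True = False" using Inr_uniq[OF p0 p0 w] w by metis
      then show False by simp
    qed
    then show "(endpt Hc q False = endpt Hc p0 False \<and> endpt Hc q True \<noteq> endpt Hc p0 False) \<or>
               (endpt Hc q True = endpt Hc p0 False \<and> endpt Hc q False \<noteq> endpt Hc p0 False)"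
      using qp by simp
  next
    fix w assume w: "w \<in> verts Om - {endpt Hc p0 False}"
    obtain q b where qb: "q \<in> CC" "endpt Hc q b = w" using vertsE w by blast
    then have "endpt Hc p0 b = w" using B1[OF qb(1)] by simp
    then show "\<exists>z. w = Inr z" using False by (cases w) auto
  qed
qed

lemma verts_fin: "finite (verts Om)"
proof -
  have "verts Om = (\<lambda>(q, b). endpt Hc q b) ` (CC \<times> UNIV)" by (auto simp: Om_verts)
  moreover have "finite CC" using pieces_fin CC_sub by (rule finite_subset[rotated])
  ultimately show ?thesis by simp
qed

lemma wf_Om: "wf_graph Om"
  unfolding wf_graph_def
proof (intro conjI ballI)
  show "finite (verts Om)" by (rule verts_fin)
  show "finite (edges Om)" unfolding Om_edges using pieces_fin CC_sub by (rule finite_subset[rotated])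
  fix q assume q: "q \<in> edges Om"
  then have qc: "q \<in> CC" by (simp add: Om_edges)
  show "fst (ends Om q) \<in> verts Om" using endpt_in_Om[OF qc, of False] by (simp add: Om_ends endpt_fst)
  show "snd (ends Om q) \<in> verts Om" using endpt_in_Om[OF qc, of True] by (simp add: Om_ends endpt_snd)
  obtain e a b where qe: "q = (e, a, b)" by (cases q) auto
  have "a < b" using piece_bounds[of e a b] qc CC_sub qe by auto
  then show "len Om q > 0" using qe by (simp add: Om_len H_len)
qed

theorem main_comp:
  "(star_graph Om \<or> interval_graph Om) \<and> standard_graph Om \<and>
   generic_eigenfunction Om (k\<^sup>2) gg \<and> Ncount Om k = nodal_count Om gg"
proof -
  obtain c where c: "c \<in> verts Om"
    and st: "\<forall>q\<in>CC. (endpt Hc q False = c \<and> endpt Hc q True \<noteq> c) \<or> (endpt Hc q True = c \<and> endpt Hc q False \<noteq> c)"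
    and lv: "\<forall>w\<in>verts Om - {c}. \<exists>z. w = Inr z"
    using star_exists by blast
  have lv1: "\<forall>w\<in>verts Om - {c}. deg Om w = 1"
  proof
    fix w assume w: "w \<in> verts Om - {c}"
    then obtain z where "w = Inr z" using lv by blast
    then show "deg Om w = 1" using deg_Inr w by simp
  qed
  have st': "\<forall>e\<in>edges Om. (fst (ends Om e) = c \<and> snd (ends Om e) \<noteq> c) \<or> (snd (ends Om e) = c \<and> fst (ends Om e) \<noteq> c)"
    using st by (simp add: Om_edges Om_ends endpt_fst endpt_snd)
  have star: "star_graph Om" unfolding star_graph_def using c st' lv1 by blast
  have ne: "edges Om \<noteq> {}" using p0_CC by (auto simp: Om_edges)
  interpret SG: stargr Om c using wf_Om c ne st' lv1 by unfold_locales auto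
  have gval: "\<forall>e\<in>edges Om. \<forall>b. endval Om gg e b \<noteq> 0"
    using endval_nz CC_sub by (auto simp: Om_edges Om_endval)
  have gnoN: "\<forall>e\<in>edges Om. \<forall>t. 0 < t \<and> t < len Om e \<longrightarrow> Dv Om gg e t \<noteq> 0"
  proof (intro ballI allI impI)
    fix q t assume q: "q \<in> edges Om" and t: "0 < t \<and> t < len Om q"
    obtain e a b where qe: "q = (e, a, b)" by (cases q) auto
    have qp: "(e, a, b) \<in> pieces G f" using q qe CC_sub by (auto simp: Om_edges)
    have t': "t \<in> {0..b - a}" "0 < t" "t < b - a" using t qe by (auto simp: Om_len H_len)
    have "Dv G f e (a + t) \<noteq> 0" using piece_interior[OF qp] t' by simp
    then show "Dv Om gg q t \<noteq> 0" using Dv_H(1)[OF qp t'(1)] qe by (simp add: Om_Dv)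
  qed
  interpret SK: stark Om c k gg using kpos solves_Om gval gnoN by unfold_locales auto
  have conn: "connected_graph Om"
    unfolding connected_graph_def
  proof (intro conjI ballI)
    show "verts Om \<noteq> {}" using c by auto
    have toc: "(c, w) \<in> (vadj Om)\<^sup>* \<and> (w, c) \<in> (vadj Om)\<^sup>*" if w: "w \<in> verts Om" for w
    proof (cases "w = c")
      case True then show ?thesis by simp
    next
      case False
      obtain q b where qb: "q \<in> CC" "endpt Hc q b = w" using vertsE w by blast
      have qe: "q \<in> edges Om" using qb by (simp add: Om_edges)
      have va: "(fst (ends Om q), snd (ends Om q)) \<in> vadj Om" "(snd (ends Om q), fst (ends Om q)) \<in> vadj Om"
        using qe unfolding vadj_def by blast+
      have "(fst (ends Om q) = c \<and> snd (ends Om q) = w) \<or> (snd (ends Om q) = c \<and> fst (ends Om q) = w)"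
        using st qb False by (cases b) (auto simp: Om_ends endpt_fst endpt_snd)
      then have "(c, w) \<in> vadj Om \<and> (w, c) \<in> vadj Om" using va by auto
      then show ?thesis by auto
    qed
    fix u w assume "u \<in> verts Om" "w \<in> verts Om"
    then show "(u, w) \<in> (vadj Om)\<^sup>*" using toc by (meson rtrancl_trans)
  qed
  have degs: "\<forall>w\<in>verts Om. deg Om w \<noteq> 2"
  proof
    fix w assume w: "w \<in> verts Om"
    show "deg Om w \<noteq> 2"
    proof (cases w)
      case (Inl v)
      then have "deg Om w = deg G v" using deg_Inl w by simp
      moreover have "v \<in> verts G" using Inl_ends_at(1) w Inl by simp
      ultimately show ?thesis using std by (simp add: standard_graph_def)
    next
      case (Inr z)
      then show ?thesis using deg_Inr w by simp
    qed
  qed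
  have std_Om: "standard_graph Om" unfolding standard_graph_def using wf_Om conn degs by simp
  have eig: "is_eigenfunction Om (k\<^sup>2) gg"
    unfolding is_eigenfunction_def
  proof (intro conjI bexI)
    show "solves Om (k\<^sup>2) gg" by (rule solves_Om)
    show "p0 \<in> edges Om" using p0_CC by (simp add: Om_edges)
    show "0 \<in> {0..len Om p0}" using wf_Om p0_CC by (auto simp: wf_graph_def Om_edges less_imp_le)
    show "gg p0 0 \<noteq> 0" using endval_nz[OF p0, of False] by (simp add: endval_def)
  qed
  have outd: "\<forall>v\<in>verts Om - boundary Om. \<forall>p\<in>ends_at Om v. outder Om gg (fst p) (snd p) \<noteq> 0"
  proof (intro ballI)
    fix w p assume w: "w \<in> verts Om - boundary Om" and p: "p \<in> ends_at Om w"
    have d1: "deg Om w \<noteq> 1" using w by (simp add: boundary_def)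
    obtain v where v: "w = Inl v" using d1 deg_Inr w by (cases w) auto
    have wv: "Inl v \<in> verts Om" using w v by simp
    have vG: "v \<in> verts G" "deg G v \<noteq> 1" using Inl_ends_at(1)[OF wv] deg_Inl[OF wv] d1 v by auto
    obtain e bb where eb: "(e, bb) \<in> ends_at G v" "p = pmap (e, bb)" using p v Inl_ends_at(2)[OF wv] by auto
    have "v \<in> verts G - boundary G" using vG by (simp add: boundary_def)
    then have "outder G f e bb \<noteq> 0"
      using gen eb(1) unfolding generic_eigenfunction_def by fastforce
    then show "outder Om gg (fst p) (snd p) \<noteq> 0"
      using pmap_vals(2)[OF eb(1)] eb(2) by (simp add: pmap_def Om_outder)
  qed
  have endv: "\<forall>v\<in>verts Om. \<forall>p\<in>ends_at Om v. endval Om gg (fst p) (snd p) \<noteq> 0"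
    using gval by (auto simp: ends_at_def)
  have gen_Om: "generic_eigenfunction Om (k\<^sup>2) gg"
    unfolding generic_eigenfunction_def using eig SK.star_main outd endv by simp
  show ?thesis using star std_Om gen_Om SK.star_main by simp
qed

end

theorem lemma3p1:
  fixes G :: "('v, 'e) mgraph"
    and f :: "'e \<Rightarrow> real \<Rightarrow> real"
    and k :: real
    and \<Omega> :: "('v + 'e \<times> real \<times> bool, 'e \<times> real \<times> real) mgraph"
  assumes "standard_graph G"
    and "generic_eigenfunction G (k\<^sup>2) f"
    and "k > pi / Lmin G"
    and "neumann_domain G f \<Omega>"
  shows "(star_graph \<Omega> \<or> interval_graph \<Omega>) \<and>
         standard_graph \<Omega> \<and>
         generic_eigenfunction \<Omega> (k\<^sup>2) (restrict_nd f) \<and>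
         Ncount \<Omega> k = nodal_count \<Omega> (restrict_nd f)"
proof -
  interpret gctx G f k using assms(1-3) by unfold_locales
  obtain p0 where p0: "p0 \<in> edges (cut_graph G f)" and om: "\<Omega> = component_graph (cut_graph G f) p0"
    using assms(4) by (auto simp: neumann_domain_def)
  have pp: "p0 \<in> pieces G f" using p0 by (simp add: cut_graph_def)
  interpret gcomp G f k p0 using pp by unfold_locales
  have "\<Omega> = Om" using om by (simp add: Om_def Hc_def)
  then show ?thesis using main_comp by (simp add: gg_def)
qed


end
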